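(* Let $\mu$ be a super-strict partition with $|\mu|\ge 2$, and let $\tau=(\mu_1-1,\mu_2,\mu_3,\ldots)$, so that $\mu=\tau+(1)$. Then $$\Theta_\mu\!\left(\frac{zt}{1-zt}\right)=F_{\tau}(z,1)+F_{\tau,\mu}(z,t).$$ In particular $F_\mu(z,1)=\left.\Theta_\mu\!\left(\frac{zt}{1-zt}\right)\right|_{t=1}$, i.e. $\sum_{n\ge1}|\mathrm{Av}_n(\mu)|z^n$ equals this specialization.
   Context: A partition is a weakly decreasing sequence $\alpha_1\ge\alpha_2\ge\cdots$ of nonnegative integers with finitely many nonzero terms (its parts); its weight is $|\alpha|=\sum_i\alpha_i$. A partition is identified with its Ferrers board (row $i$ has $\alpha_i$ boxes, rows top- and left-justified). A partition $\alpha$ contains $\mu$ if one can delete some set of rows and some set of columns from the Ferrers board of $\alpha$ so that, after top/left-justifying the remaining boxes, one obtains the Ferrers board of $\mu$; otherwise $\alpha$ avoids $\mu$. $\mathrm{Av}_n(\mu)$ is the set of partitions of weight $n$ avoiding $\mu$. A partition is strict if its positive parts are distinct, and super-strict if any two of its positive parts differ by at least $2$. For partitions $\alpha,\beta$, $\alpha+\beta=(\alpha_1+\beta_1,\alpha_2+\beta_2,\ldots)$; $(w^m)$ denotes the partition with $m$ parts equal to $w$. $m(\alpha)$ is the multiplicity of the largest part $\alpha_1$ in $\alpha$. For partitions $\tau,\mu$, $\mathcal Q(\tau,\mu)$ is the set of partitions of positive weight that contain $\tau$ and avoid $\mu$. For a set $S$ of partitions, $F_S(z,t)=\sum_{\alpha\in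 S}z^{|\alpha|}t^{m(\alpha)}$ ($F_\emptyset=0$); $F_\mu(z,t)$ denotes $F_S$ for $S$ the set of partitions of positive weight avoiding $\mu$, and $F_{\tau,\mu}(z,t)=F_{\mathcal Q(\tau,\mu)}(z,t)$. Operators on series $G(z,t)=\sum_{n\ge1}\sum_{m\ge0}a_{n,m}z^nt^m$: $\mathcal E G(z,t)=\dfrac{G(z,1)-ztG(z,zt)}{1-zt}$, and $\mathcal N G(z,t)=G(z,0)+\sum_{n\ge1}\sum_{m\ge1}a_{n,m}\dfrac{1}{1-z^m}\cdot\dfrac{1-(tz)^m}{1-tz}z^n$. The southeast border of a partition $\mu$ is the lattice path of unit east and north steps from the bottom-left to the top-right corner of its Ferrers board tracing the bottoms of the columns and right ends of the rows. For strict $\mu$ every north step other than the last is immediately followed by an east step; such a pair is called a north-east step, so the border is read as: an initial east step, then a sequence of east and north-east steps, then a final north step. For super-strict $\mu$ of weight $\ge2$, $\Theta_\mu$ is the sequence of symbols obtained by reading this border from bottom-left to top-right, ignoring the initial east step and the final east step followed by the final north step, and recording each east step as $\mathcal E$ and each north-east step as $\mathcal N$ (e.g. $\Theta_{(8,5,3)}=(\mathcal E,\mathcal E,\mathcal N,\mathcal E,\mathcal N,\mathcal E)$, $\Theta_{(2)}=\emptyset$). For $\Theta=(\Theta_1,\ldots,\Theta_r)$, $\Theta G=\Theta_r\circ\cdots\circ\Theta_1 G$, and $\emptyset G=G$. *)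

theory Defs
  imports Main "HOL-Computational_Algebra.Polynomial" "HOL-Computational_Algebra.Formal_Power_Series"
begin

definition is_partition :: "nat list \<Rightarrow> bool" where
  "is_partition \<alpha> \<longleftrightarrow> sorted (rev \<alpha>) \<and> 0 \<notin> set \<alpha>"

definition weight :: "nat list \<Rightarrow> nat" where
  "weight \<alpha> = sum_list \<alpha>"

definition super_strict :: "nat list \<Rightarrow> bool" where
  "super_strict \<mu> \<longleftrightarrow> (\<forall>i. i + 1 < length \<mu> \<longrightarrow> \<mu> ! (i+1) + 2 \<le> \<mu> ! i)"

text \<open>Containment: keep a set R of rows and a set C of columns of the Ferrers board of alpha;
  the kept part of row i has card (C \<inter> {..<alpha!i}) boxes after left-justification;
  top-justification removes the emptied rows.\<close>

definition contains :: "nat list \<Rightarrow> nat list \<Rightarrow> bool" where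
  "contains \<alpha> \<mu> \<longleftrightarrow> (\<exists>R C. R \<subseteq> {..<length \<alpha>} \<and>
      filter (\<lambda>x. 0 < x) (map (\<lambda>i. card (C \<inter> {..<\<alpha> ! i})) (sorted_list_of_set R)) = \<mu>)"

definition avoids :: "nat list \<Rightarrow> nat list \<Rightarrow> bool" where
  "avoids \<alpha> \<mu> \<longleftrightarrow> \<not> contains \<alpha> \<mu>"

definition Av :: "nat \<Rightarrow> nat list \<Rightarrow> nat list set" where
  "Av n \<mu> = {\<alpha>. is_partition \<alpha> \<and> weight \<alpha> = n \<and> avoids \<alpha> \<mu>}"

definition mlarge :: "nat list \<Rightarrow> nat" where
  "mlarge \<alpha> = length (filter (\<lambda>x. x = hd \<alpha>) \<alpha>)"

definition AvSet :: "nat list \<Rightarrow> nat list set" where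
  "AvSet \<mu> = {\<alpha>. is_partition \<alpha> \<and> 0 < weight \<alpha> \<and> avoids \<alpha> \<mu>}"

definition QSet :: "nat list \<Rightarrow> nat list \<Rightarrow> nat list set" where
  "QSet \<tau> \<mu> = {\<alpha>. is_partition \<alpha> \<and> 0 < weight \<alpha> \<and> contains \<alpha> \<tau> \<and> avoids \<alpha> \<mu>}"

text \<open>A series G(z,t) whose z^n-coefficient is a polynomial in t is an element of
  int poly fps: the n-th coefficient is the polynomial in t.\<close>

type_synonym bser = "int poly fps"

definition Tvar :: bser where "Tvar = fps_const [:0, 1 :]"

definition Fser :: "nat list set \<Rightarrow> bser" where
  "Fser S = Abs_fps (\<lambda>n. \<Sum>\<alpha>\<in>{\<alpha>\<in>S. is_partition \<alpha> \<and> weight \<alpha> = n}. monom 1 (mlarge \<alpha>))"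

text \<open>G(z,1), G(z,0), and G(z,zt)\<close>
definition at_t1 :: "bser \<Rightarrow> bser" where
  "at_t1 G = Abs_fps (\<lambda>n. [:poly (fps_nth G n) 1 :])"

definition at_t0 :: "bser \<Rightarrow> bser" where
  "at_t0 G = Abs_fps (\<lambda>n. [:poly (fps_nth G n) 0 :])"

definition at_zt :: "bser \<Rightarrow> bser" where
  "at_zt G = Abs_fps (\<lambda>k. \<Sum>n\<le>k. monom (coeff (fps_nth G n) (k - n)) (k - n))"

text \<open>1/f for a series with constant coefficient 1\<close>
definition inv1 :: "bser \<Rightarrow> bser" where
  "inv1 f = fps_right_inverse f 1"

definition opE :: "bser \<Rightarrow> bser" where
  "opE G = (at_t1 G - Tvar * fps_X * at_zt G) * inv1 (1 - Tvar * fps_X)"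

definition Nterm :: "int \<Rightarrow> nat \<Rightarrow> nat \<Rightarrow> bser" where
  "Nterm a n m = fps_const [:a :] * inv1 (1 - fps_X ^ m) * (1 - (Tvar * fps_X) ^ m)
      * inv1 (1 - Tvar * fps_X) * fps_X ^ n"

text \<open>The double sum over n \<ge> 1, m \<ge> 1 is formally convergent since the (n,m) term has
  z-order \<ge> n and a_{n,m} = 0 for m > degree (fps_nth G n); we write it coefficientwise.\<close>
definition opN :: "bser \<Rightarrow> bser" where
  "opN G = at_t0 G + Abs_fps (\<lambda>k. \<Sum>n\<in>{1..k}. \<Sum>m\<in>{1..degree (fps_nth G n)}.
      fps_nth (Nterm (coeff (fps_nth G n) m) n m) k)"

datatype step = East | North

definition border :: "nat list \<Rightarrow> step list" where
  "border \<mu> = concat (map (\<lambda>i. replicate (\<mu> ! i - (if i + 1 < length \<mu> then \<mu> ! (i+1) else 0)) East @ [North])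
                    (rev [0..<length \<mu>]))"

datatype theta_op = OpE | OpN

fun tokens :: "step list \<Rightarrow> theta_op list" where
  "tokens [] = []"
| "tokens (East # xs) = OpE # tokens xs"
| "tokens (North # East # xs) = OpN # tokens xs"
| "tokens (North # xs) = []"

text \<open>ignore the initial east step and the final east step followed by the final north step\<close>
definition Theta :: "nat list \<Rightarrow> theta_op list" where
  "Theta \<mu> = tokens (butlast (butlast (tl (border \<mu>))))"

definition apply_op :: "theta_op \<Rightarrow> bser \<Rightarrow> bser" where
  "apply_op p G = (case p of OpE \<Rightarrow> opE G | OpN \<Rightarrow> opN G)"

definition apply_Theta :: "theta_op list \<Rightarrow> bser \<Rightarrow> bser" where
  "apply_Theta \<Theta> G = foldl (\<lambda>H p. apply_op p H) G \<Theta>"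

lemma "Theta [8,5,3] = [OpE, OpE, OpN, OpE, OpN, OpE]"
  by (simp add: Theta_def border_def upt_rec numeral_eq_Suc)
lemma "Theta [2] = []"
  by (simp add: Theta_def border_def upt_rec numeral_eq_Suc)

end

theory Submission
  imports Defs
begin

unbundle fps_syntax


fun ch :: "nat set \<Rightarrow> nat list \<Rightarrow> nat \<Rightarrow> bool" where
  "ch S [] e = True"
| "ch S (t#\<sigma>) e = (\<exists>v\<in>S. t \<le> v \<and> v - t \<le> e \<and> ch S \<sigma> (v - t))"

definition topv :: "nat list \<Rightarrow> nat" where
  "topv xs = (case xs of [] \<Rightarrow> 0 | t#_ \<Rightarrow> t)"

definition cnt :: "nat set \<Rightarrow> nat \<Rightarrow> nat" where
  "cnt C a = card (C \<inter> {..<a})"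

lemma cnt_le: "cnt C a \<le> a"
proof -
  have "card (C \<inter> {..<a}) \<le> card {..<a}" by (rule card_mono) auto
  thus ?thesis by (simp add: cnt_def)
qed

lemma cnt_diff: assumes "b \<le> a" shows "cnt C a \<le> cnt C b + (a - b)"
proof -
  have "C \<inter> {..<a} \<subseteq> (C \<inter> {..<b}) \<union> {b..<a}" by auto
  hence "card (C \<inter> {..<a}) \<le> card ((C \<inter> {..<b}) \<union> {b..<a})" by (intro card_mono) auto
  also have "\<dots> \<le> card (C \<inter> {..<b}) + card {b..<a}" by (rule card_Un_le)
  finally show ?thesis by (simp add: cnt_def)
qed

lemma ch_mono: "ch S \<tau> e \<Longrightarrow> e \<le> e' \<Longrightarrow> ch S \<tau> e'"
  by (induction \<tau> arbitrary: e) auto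

lemma js_ch:
  assumes "sorted_wrt (<) js" "set js \<subseteq> {..<length \<alpha>}" "sorted (rev \<alpha>)"
    "\<forall>i\<in>set js. \<alpha>!i - cnt C (\<alpha>!i) \<le> e"
  shows "ch (set \<alpha>) (map (\<lambda>i. cnt C (\<alpha>!i)) js) e"
  using assms
proof (induction js arbitrary: e)
  case Nil then show ?case by simp
next
  case (Cons i0 js)
  have i0: "i0 < length \<alpha>" using Cons.prems by auto
  have IH: "ch (set \<alpha>) (map (\<lambda>i. cnt C (\<alpha>!i)) js) (\<alpha>!i0 - cnt C (\<alpha>!i0))"
  proof (rule Cons.IH)
    show "sorted_wrt (<) js" "set js \<subseteq> {..<length \<alpha>}" "sorted (rev \<alpha>)" using Cons.prems by auto
    show "\<forall>i\<in>set js. \<alpha> ! i - cnt C (\<alpha> ! i) \<le> \<alpha> ! i0 - cnt C (\<alpha> ! i0)"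
    proof
      fix i assume i: "i \<in> set js"
      hence "i0 < i" "i < length \<alpha>" using Cons.prems by auto
      hence le: "\<alpha>!i \<le> \<alpha>!i0" using sorted_rev_nth_mono[OF Cons.prems(3)] by auto
      have "cnt C (\<alpha>!i0) \<le> cnt C (\<alpha>!i) + (\<alpha>!i0 - \<alpha>!i)" by (rule cnt_diff[OF le])
      moreover have "cnt C (\<alpha>!i) \<le> \<alpha>!i" "cnt C (\<alpha>!i0) \<le> \<alpha>!i0" by (rule cnt_le)+
      ultimately show "\<alpha> ! i - cnt C (\<alpha> ! i) \<le> \<alpha> ! i0 - cnt C (\<alpha> ! i0)" using le by linarith
    qed
  qed
  have "\<alpha>!i0 \<in> set \<alpha>" using i0 by simp
  moreover have "cnt C (\<alpha>!i0) \<le> \<alpha>!i0" by (rule cnt_le)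
  moreover have "\<alpha>!i0 - cnt C (\<alpha>!i0) \<le> e" using Cons.prems by auto
  ultimately show ?case using IH by auto
qed

lemma contains_imp_ch:
  assumes "is_partition \<alpha>" "contains \<alpha> \<tau>"
  shows "\<exists>e. ch (set \<alpha>) \<tau> e"
proof -
  from assms(2) obtain R C where R: "R \<subseteq> {..<length \<alpha>}"
    and f: "filter (\<lambda>x. 0 < x) (map (\<lambda>i. card (C \<inter> {..<\<alpha> ! i})) (sorted_list_of_set R)) = \<tau>"
    unfolding contains_def by blast
  define js where "js = filter (\<lambda>i. 0 < cnt C (\<alpha>!i)) (sorted_list_of_set R)"
  have fin: "finite R" using R finite_subset by blast
  have t: "\<tau> = map (\<lambda>i. cnt C (\<alpha>!i)) js" using f by (simp add: js_def filter_map o_def cnt_def)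
  have s: "sorted_wrt (<) js" unfolding js_def
    by (rule sorted_wrt_filter) (simp add: fin)
  have sj: "set js \<subseteq> {..<length \<alpha>}" using R fin by (auto simp: js_def)
  have sr: "sorted (rev \<alpha>)" using assms(1) by (simp add: is_partition_def)
  have "\<forall>i\<in>set js. \<alpha>!i - cnt C (\<alpha>!i) \<le> sum_list \<alpha>"
  proof
    fix i assume "i \<in> set js" hence "i < length \<alpha>" using sj by auto
    hence "\<alpha>!i \<le> sum_list \<alpha>" by (simp add: elem_le_sum_list)
    thus "\<alpha>!i - cnt C (\<alpha>!i) \<le> sum_list \<alpha>" by linarith
  qed
  from js_ch[OF s sj sr this] t show ?thesis by auto
qed

lemma ch_imp_js:
  assumes "ch (set \<alpha>) \<tau> e" "sorted_wrt (>) \<tau>" "sorted (rev \<alpha>)"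
  shows "\<exists>js C. sorted_wrt (<) js \<and> set js \<subseteq> {..<length \<alpha>} \<and> (\<forall>i\<in>set js. \<alpha>!i \<le> e + topv \<tau>)
     \<and> C \<subseteq> {..<e + topv \<tau>} \<and> card C = topv \<tau> \<and> map (\<lambda>i. cnt C (\<alpha>!i)) js = \<tau>"
  using assms
proof (induction \<tau> arbitrary: e)
  case Nil
  show ?case by (rule exI[of _ "[]"], rule exI[of _ "{}"]) (simp add: topv_def)
next
  case (Cons t \<sigma>)
  from Cons.prems(1) obtain v where v: "v \<in> set \<alpha>" "t \<le> v" "v - t \<le> e" "ch (set \<alpha>) \<sigma> (v - t)" by auto
  define e' where "e' = v - t"
  have ss: "sorted_wrt (>) \<sigma>" using Cons.prems(2) by simp
  from Cons.IH[OF v(4)[folded e'_def] ss Cons.prems(3)] obtain js C where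
    js: "sorted_wrt (<) js" "set js \<subseteq> {..<length \<alpha>}" "\<forall>i\<in>set js. \<alpha>!i \<le> e' + topv \<sigma>"
      "C \<subseteq> {..<e' + topv \<sigma>}" "card C = topv \<sigma>" "map (\<lambda>i. cnt C (\<alpha>!i)) js = \<sigma>" by blast
  define t1 where "t1 = topv \<sigma>"
  have t1t: "t1 \<le> t" using Cons.prems(2) by (cases \<sigma>) (auto simp: t1_def topv_def)
  have t1lt: "\<sigma> \<noteq> [] \<Longrightarrow> t1 < t" using Cons.prems(2) by (cases \<sigma>) (auto simp: t1_def topv_def)
  obtain i0 where i0: "i0 < length \<alpha>" "\<alpha>!i0 = v" using v(1) by (auto simp: in_set_conv_nth)
  define C' where "C' = C \<union> {e'+t1..<e'+t}"
  have ve: "v = e' + t" using v(2) by (simp add: e'_def)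
  have C'sub: "C' \<subseteq> {..<v}" using js(4) t1t ve by (auto simp: C'_def t1_def)
  have fC: "finite C" using js(4) finite_subset by blast
  have "card C' = card C + card {e'+t1..<e'+t}" unfolding C'_def
    by (rule card_Un_disjoint) (use js(4) fC in \<open>auto simp: t1_def\<close>)
  hence cC': "card C' = t" using js(5) t1t by (simp add: t1_def)
  have c0: "cnt C' (\<alpha>!i0) = t"
  proof -
    have "C' \<inter> {..<\<alpha>!i0} = C'" using C'sub i0 by auto
    thus ?thesis using cC' by (simp add: cnt_def)
  qed
  have cold: "cnt C' (\<alpha>!i) = cnt C (\<alpha>!i)" if "i \<in> set js" for i
  proof -
    have "\<alpha>!i \<le> e' + t1" using js(3) that by (simp add: t1_def)
    hence "C' \<inter> {..<\<alpha>!i} = C \<inter> {..<\<alpha>!i}" by (auto simp: C'_def)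
    thus ?thesis by (simp add: cnt_def)
  qed
  have lt: "i0 < i" if "i \<in> set js" for i
  proof -
    have ne: "\<sigma> \<noteq> []" using that js(6) by auto
    have "\<alpha>!i \<le> e' + t1" using js(3) that by (simp add: t1_def)
    hence "\<alpha>!i < \<alpha>!i0" using t1lt[OF ne] i0 ve by simp
    moreover have "i < length \<alpha>" using js(2) that by auto
    ultimately show ?thesis using sorted_rev_nth_mono[OF Cons.prems(3), of i i0] i0
      by (metis leI not_le)
  qed
  show ?case
  proof (intro exI conjI)
    show "sorted_wrt (<) (i0 # js)" using js(1) lt by simp
    show "set (i0 # js) \<subseteq> {..<length \<alpha>}" using js(2) i0 by auto
    show "\<forall>i\<in>set (i0 # js). \<alpha> ! i \<le> e + topv (t # \<sigma>)"
    proof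
      fix i assume "i \<in> set (i0 # js)"
      then consider "i = i0" | "i \<in> set js" by auto
      then show "\<alpha> ! i \<le> e + topv (t # \<sigma>)"
      proof cases
        case 1 then show ?thesis using i0(2) v(2,3) by (simp add: topv_def)
      next
        case 2 then have "\<alpha>!i \<le> e' + t1" using js(3) by (simp add: t1_def)
        moreover have "e' \<le> e" using v(3) by (simp add: e'_def)
        ultimately show ?thesis using t1t by (simp add: topv_def)
      qed
    qed
    have "v \<le> e + t" using v(2,3) by linarith
    then show "C' \<subseteq> {..<e + topv (t # \<sigma>)}" using C'sub by (auto simp: topv_def)
    show "card C' = topv (t # \<sigma>)" using cC' by (simp add: topv_def)
    show "map (\<lambda>i. cnt C' (\<alpha> ! i)) (i0 # js) = t # \<sigma>"
      using c0 cold js(6) by (auto intro!: map_cong)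
  qed
qed

lemma contains_iff_ch:
  assumes "is_partition \<alpha>" "sorted_wrt (>) \<tau>" "0 \<notin> set \<tau>"
  shows "contains \<alpha> \<tau> \<longleftrightarrow> (\<exists>e. ch (set \<alpha>) \<tau> e)"
proof
  assume "contains \<alpha> \<tau>" thus "\<exists>e. ch (set \<alpha>) \<tau> e" using contains_imp_ch assms(1) by blast
next
  assume "\<exists>e. ch (set \<alpha>) \<tau> e"
  then obtain e where e: "ch (set \<alpha>) \<tau> e" by blast
  have sr: "sorted (rev \<alpha>)" using assms(1) by (simp add: is_partition_def)
  from ch_imp_js[OF e assms(2) sr] obtain js C where js: "sorted_wrt (<) js" "set js \<subseteq> {..<length \<alpha>}"
     "map (\<lambda>i. cnt C (\<alpha>!i)) js = \<tau>" by blast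
  have sl: "sorted_list_of_set (set js) = js"
    using js(1) by (simp add: sorted_list_of_set_sort_remdups strict_sorted_iff distinct_remdups_id sorted_sort_id)
  have "filter (\<lambda>x. 0 < x) (map (\<lambda>i. card (C \<inter> {..<\<alpha> ! i})) (sorted_list_of_set (set js))) = \<tau>"
    using js(3) assms(3) unfolding sl cnt_def
    by (metis (mono_tags, lifting) filter_True gr0I)
  thus "contains \<alpha> \<tau>" unfolding contains_def using js(2) by blast
qed


definition ok :: "nat set \<Rightarrow> nat \<Rightarrow> nat list \<Rightarrow> nat \<Rightarrow> bool" where
  "ok S t \<sigma> v \<longleftrightarrow> t \<le> v \<and> ch S \<sigma> (v - t)"

definition sp :: "nat list \<Rightarrow> bool" where
  "sp \<tau> \<longleftrightarrow> sorted_wrt (>) \<tau> \<and> 0 \<notin> set \<tau>"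

lemma ok_mono: "ok S t \<sigma> v \<Longrightarrow> v \<le> v' \<Longrightarrow> ok S t \<sigma> v'"
  unfolding ok_def using ch_mono by (meson diff_le_mono le_trans)

lemma ok_Suc: "ok S (Suc t) \<sigma> v \<longleftrightarrow> 0 < v \<and> ok S t \<sigma> (v - 1)"
  unfolding ok_def by (cases v) auto

lemma ch_local:
  assumes "sorted_wrt (>) \<sigma>" "\<forall>x. x \<le> e + topv \<sigma> \<longrightarrow> (x \<in> S \<longleftrightarrow> x \<in> S')"
  shows "ch S \<sigma> e = ch S' \<sigma> e"
  using assms
proof (induction \<sigma> arbitrary: e)
  case Nil then show ?case by simp
next
  case (Cons t \<sigma>)
  have tt: "topv \<sigma> \<le> t" using Cons.prems(1) by (cases \<sigma>) (auto simp: topv_def)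
  have IH: "ch S \<sigma> (v - t) = ch S' \<sigma> (v - t)" if "t \<le> v" "v - t \<le> e" for v
    using Cons.prems tt that by (intro Cons.IH) (auto simp: topv_def)
  have mem: "v \<in> S \<longleftrightarrow> v \<in> S'" if "t \<le> v" "v - t \<le> e" for v
    using Cons.prems(2) that by (auto simp: topv_def)
  show ?case using IH mem by auto
qed

lemma ok_local:
  assumes "sp (t#\<sigma>)" "\<forall>x<v. (x \<in> S \<longleftrightarrow> x \<in> S')"
  shows "ok S t \<sigma> v = ok S' t \<sigma> v"
proof (cases "t \<le> v")
  case True
  have t0: "0 < t" using assms(1) by (auto simp: sp_def)
  have tt: "topv \<sigma> < t" using assms(1) t0 by (cases \<sigma>) (auto simp: topv_def sp_def)
  have "ch S \<sigma> (v - t) = ch S' \<sigma> (v - t)"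
    by (rule ch_local) (use assms tt True in \<open>auto simp: sp_def\<close>)
  thus ?thesis by (simp add: ok_def)
qed (simp add: ok_def)

lemma part_le_hd: "is_partition \<alpha> \<Longrightarrow> x \<in> set \<alpha> \<Longrightarrow> x \<le> hd \<alpha>"
  unfolding is_partition_def
  by (cases \<alpha>) (auto simp: sorted_append)

lemma contains_cons:
  assumes "is_partition \<alpha>" "\<alpha> \<noteq> []" "sp (t#\<sigma>)"
  shows "contains \<alpha> (t#\<sigma>) \<longleftrightarrow> ok (set \<alpha>) t \<sigma> (hd \<alpha>)"
proof -
  have "contains \<alpha> (t#\<sigma>) \<longleftrightarrow> (\<exists>e. ch (set \<alpha>) (t#\<sigma>) e)"
    using assms by (intro contains_iff_ch) (auto simp: sp_def)
  also have "\<dots> \<longleftrightarrow> (\<exists>v\<in>set \<alpha>. ok (set \<alpha>) t \<sigma> v)" by (auto simp: ok_def)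
  also have "\<dots> \<longleftrightarrow> ok (set \<alpha>) t \<sigma> (hd \<alpha>)"
    using assms(1,2) part_le_hd ok_mono by (metis hd_in_set)
  finally show ?thesis .
qed

lemma set_rep: "0 < m \<Longrightarrow> set (replicate m L @ \<rho>) = insert L (set \<rho>)"
  by auto

lemma hd_rep: "0 < m \<Longrightarrow> hd (replicate m L @ \<rho>) = L"
  by (cases m) auto

lemma part_rep:
  assumes "is_partition \<rho>" "\<forall>x\<in>set \<rho>. x \<le> L" "0 < L"
  shows "is_partition (replicate m L @ \<rho>)"
  using assms unfolding is_partition_def by (auto simp: sorted_append)

lemma weight_rep: "weight (replicate m L @ \<rho>) = m * L + weight \<rho>"
  by (simp add: weight_def sum_list_replicate)

lemma mlarge_rep: "0 < m \<Longrightarrow> \<forall>x\<in>set \<rho>. x < L \<Longrightarrow> mlarge (replicate m L @ \<rho>) = m"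
proof -
  assume a: "0 < m" "\<forall>x\<in>set \<rho>. x < L"
  have "filter (\<lambda>y. y = L) \<rho> = []" using a(2) by (auto simp: filter_empty_conv)
  thus ?thesis unfolding mlarge_def using a(1) by (simp add: hd_rep)
qed

lemma mlarge_rep_ge: "0 < m \<Longrightarrow> m \<le> mlarge (replicate m L @ \<rho>)"
  unfolding mlarge_def by (simp add: hd_rep)

lemma mlarge_rep_gt: "0 < m \<Longrightarrow> L \<in> set \<rho> \<Longrightarrow> m < mlarge (replicate m L @ \<rho>)"
proof -
  assume a: "0 < m" "L \<in> set \<rho>"
  have "filter (\<lambda>y. y = L) \<rho> \<noteq> []" using a(2) by (auto simp: filter_empty_conv)
  thus ?thesis unfolding mlarge_def using a(1) by (simp add: hd_rep)
qed

lemma part_drop: "is_partition \<alpha> \<Longrightarrow> is_partition (drop j \<alpha>)"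
  unfolding is_partition_def by (auto simp: rev_drop dest: in_set_dropD intro: sorted_wrt_take)

lemma part_pos: "is_partition \<alpha> \<Longrightarrow> 0 < weight \<alpha> \<Longrightarrow> \<alpha> \<noteq> []"
  by (auto simp: weight_def)

lemma hd_pos: "is_partition \<alpha> \<Longrightarrow> \<alpha> \<noteq> [] \<Longrightarrow> 0 < hd \<alpha>"
  unfolding is_partition_def by (metis gr0I hd_in_set)

lemma le_hd_sr: "sorted (rev xs) \<Longrightarrow> x \<in> set xs \<Longrightarrow> x \<le> hd xs"
  by (cases xs) (auto simp: sorted_append)

lemma take_mlarge:
  assumes "is_partition \<alpha>" "\<alpha> \<noteq> []" "j \<le> mlarge \<alpha>"
  shows "\<alpha> = replicate j (hd \<alpha>) @ drop j \<alpha>"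
proof -
  define h where "h = hd \<alpha>"
  define tw where "tw = takeWhile (\<lambda>y. y = h) \<alpha>"
  define d where "d = dropWhile (\<lambda>y. y = h) \<alpha>"
  have sr: "sorted (rev \<alpha>)" using assms(1) by (simp add: is_partition_def)
  have ad: "\<alpha> = tw @ d" by (simp add: tw_def d_def)
  have twr: "replicate (length tw) h = tw"
    by (rule replicate_length_same) (auto simp: tw_def dest: set_takeWhileD)
  have srd: "sorted (rev d)" using sr ad by (metis rev_append sorted_append)
  have dnh: "\<forall>x\<in>set d. x \<noteq> h"
  proof
    fix x assume x: "x \<in> set d"
    hence dne: "d \<noteq> []" by auto
    have "hd d \<noteq> h" using dne unfolding d_def by (rule hd_dropWhile)
    moreover have "hd d \<in> set \<alpha>" using dne ad by (metis hd_in_set in_set_conv_decomp append_assoc append_Cons)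
    hence "hd d \<le> h" using le_hd_sr[OF sr] by (simp add: h_def)
    moreover have "x \<le> hd d" using le_hd_sr[OF srd x] .
    ultimately show "x \<noteq> h" by linarith
  qed
  have "filter (\<lambda>y. y = h) \<alpha> = filter (\<lambda>y. y = h) tw @ filter (\<lambda>y. y = h) d"
    using arg_cong[OF ad, of "filter (\<lambda>y. y = h)"] by simp
  also have "filter (\<lambda>y. y = h) d = []" using dnh by (simp add: filter_empty_conv)
  also have "filter (\<lambda>y. y = h) tw = tw" by (rule filter_True) (auto simp: tw_def dest: set_takeWhileD)
  finally have ml: "mlarge \<alpha> = length tw" by (simp add: mlarge_def h_def)
  have "take j \<alpha> = take j tw" using ad assms(3) ml by simp
  also have "\<dots> = replicate j h" using assms(3) ml twr by (metis min.absorb1 take_replicate)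
  finally have "take j \<alpha> = replicate j h" .
  thus ?thesis by (metis append_take_drop_id h_def)
qed

lemma drop_le_hd: "is_partition \<alpha> \<Longrightarrow> x \<in> set (drop j \<alpha>) \<Longrightarrow> x \<le> hd \<alpha>"
  by (rule part_le_hd) (auto dest: in_set_dropD)

lemma drop_mlarge_lt:
  assumes "is_partition \<alpha>" "\<alpha> \<noteq> []"
  shows "\<forall>x\<in>set (drop (mlarge \<alpha>) \<alpha>). x < hd \<alpha>"
proof
  fix x assume x: "x \<in> set (drop (mlarge \<alpha>) \<alpha>)"
  define h where "h = hd \<alpha>"
  define n where "n = mlarge \<alpha>"
  define d where "d = drop n \<alpha>"
  have le: "x \<le> h" using drop_le_hd[OF assms(1) x] by (simp add: h_def)
  have eq: "\<alpha> = replicate n h @ d"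
    unfolding h_def n_def d_def by (rule take_mlarge[OF assms order_refl])
  have "length (filter (\<lambda>y. y = h) \<alpha>) = length (filter (\<lambda>y. y = h) (replicate n h @ d))"
    using arg_cong[OF eq, of "\<lambda>l. length (filter (\<lambda>y. y = h) l)"] by simp
  also have "\<dots> = n + length (filter (\<lambda>y. y = h) d)" by simp
  finally have "length (filter (\<lambda>y. y = h) \<alpha>) = n + length (filter (\<lambda>y. y = h) d)" .
  moreover have "n = length (filter (\<lambda>y. y = h) \<alpha>)" by (simp add: n_def mlarge_def h_def)
  ultimately have "n = n + length (filter (\<lambda>y. y = h) d)" by simp
  hence "filter (\<lambda>y. y = h) d = []" by simp
  hence "x \<noteq> h" using x by (simp add: filter_empty_conv d_def n_def)
  thus "x < hd \<alpha>" using le by (simp add: h_def)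
qed

lemma mlarge_pos: "\<alpha> \<noteq> [] \<Longrightarrow> 0 < mlarge \<alpha>"
  unfolding mlarge_def by (cases \<alpha>) auto

lemma M1:
  assumes "0 < m" "is_partition \<rho>" "\<forall>x\<in>set \<rho>. x \<le> L" "0 < L" "sp (t#\<sigma>)"
  shows "contains (replicate m L @ \<rho>) (t#\<sigma>) \<longleftrightarrow> ok (set \<rho>) t \<sigma> L"
proof -
  have "contains (replicate m L @ \<rho>) (t#\<sigma>) \<longleftrightarrow> ok (insert L (set \<rho>)) t \<sigma> L"
    using contains_cons[of "replicate m L @ \<rho>" t \<sigma>] part_rep[OF assms(2,3,4)] assms(1,5)
    by (simp add: hd_rep set_rep)
  also have "\<dots> \<longleftrightarrow> ok (set \<rho>) t \<sigma> L" by (rule ok_local[OF assms(5)]) auto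
  finally show ?thesis .
qed

lemma M2:
  assumes "0 < m" "is_partition \<rho>" "\<forall>x\<in>set \<rho>. x \<le> L" "0 < L" "sp (t#\<sigma>)" "t < s"
  shows "contains (replicate m L @ \<rho>) (s#t#\<sigma>) \<longleftrightarrow>
     s \<le> L \<and> (\<exists>v\<in>set \<rho>. ok (set \<rho>) t \<sigma> v \<and> v + s \<le> L + t)"
proof -
  let ?a = "replicate m L @ \<rho>"
  have sp2: "sp (s#t#\<sigma>)" using assms(5,6) by (auto simp: sp_def)
  have "contains ?a (s#t#\<sigma>) \<longleftrightarrow> ok (insert L (set \<rho>)) s (t#\<sigma>) L"
    using contains_cons[of ?a s "t#\<sigma>"] part_rep[OF assms(2,3,4)] assms(1) sp2
    by (simp add: hd_rep set_rep)
  also have "\<dots> \<longleftrightarrow> s \<le> L \<and> (\<exists>v\<in>insert L (set \<rho>). ok (insert L (set \<rho>)) t \<sigma> v \<and> v + s \<le> L + t)"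
    unfolding ok_def by auto
  also have "\<dots> \<longleftrightarrow> s \<le> L \<and> (\<exists>v\<in>set \<rho>. ok (set \<rho>) t \<sigma> v \<and> v + s \<le> L + t)"
  proof -
    have "ok (insert L (set \<rho>)) t \<sigma> v = ok (set \<rho>) t \<sigma> v" if "v < L" for v
      by (rule ok_local[OF assms(5)]) (use that in auto)
    hence "(\<exists>v\<in>insert L (set \<rho>). ok (insert L (set \<rho>)) t \<sigma> v \<and> v + s \<le> L + t) \<longleftrightarrow>
           (\<exists>v\<in>set \<rho>. ok (set \<rho>) t \<sigma> v \<and> v + s \<le> L + t)" (is "?A \<longleftrightarrow> ?B")
    proof -
      note loc = \<open>\<And>v. v < L \<Longrightarrow> ok (insert L (set \<rho>)) t \<sigma> v = ok (set \<rho>) t \<sigma> v\<close>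
      show ?thesis
      proof
        assume ?A
        then obtain v where v: "v \<in> insert L (set \<rho>)" "ok (insert L (set \<rho>)) t \<sigma> v" "v + s \<le> L + t" by blast
        have "v < L" using v(3) assms(6) by linarith
        thus ?B using v loc by auto
      next
        assume ?B
        then obtain v where v: "v \<in> set \<rho>" "ok (set \<rho>) t \<sigma> v" "v + s \<le> L + t" by blast
        have "v < L" using v(3) assms(6) by linarith
        thus ?A using v loc by auto
      qed
    qed
    thus ?thesis by simp
  qed
  finally show ?thesis .
qed


lemma sp_Suc: "sp (t#\<sigma>) \<Longrightarrow> sp (Suc t#\<sigma>)"
  by (auto simp: sp_def)

lemma sp_SS: "sp (t#\<sigma>) \<Longrightarrow> sp (Suc (Suc t)#\<sigma>)"
  by (auto simp: sp_def)

lemma sp_N1: "sp (t#\<sigma>) \<Longrightarrow> sp (Suc t#t#\<sigma>)"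
  by (auto simp: sp_def)

lemma sp_N2: "sp (t#\<sigma>) \<Longrightarrow> sp (Suc (Suc t)#t#\<sigma>)"
  by (auto simp: sp_def)

lemma sp_pos: "sp (t#\<sigma>) \<Longrightarrow> 0 < t"
  by (auto simp: sp_def)

lemma ok_ge: "ok S t \<sigma> v \<Longrightarrow> t \<le> v"
  by (simp add: ok_def)

lemma obtain_dec:
  assumes "is_partition \<alpha>" "0 < weight \<alpha>" "0 < j" "j \<le> mlarge \<alpha>"
  obtains L \<rho> where "\<alpha> = replicate j L @ \<rho>" "is_partition \<rho>" "\<forall>x\<in>set \<rho>. x \<le> L" "0 < L"
    "L = hd \<alpha>" "\<rho> = drop j \<alpha>"
proof -
  have ne: "\<alpha> \<noteq> []" using part_pos assms by blast
  show ?thesis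
  proof (rule that[of "hd \<alpha>" "drop j \<alpha>"])
    show "\<alpha> = replicate j (hd \<alpha>) @ drop j \<alpha>" by (rule take_mlarge[OF assms(1) ne assms(4)])
    show "is_partition (drop j \<alpha>)" by (rule part_drop[OF assms(1)])
    show "\<forall>x\<in>set (drop j \<alpha>). x \<le> hd \<alpha>" using drop_le_hd[OF assms(1)] by auto
    show "0 < hd \<alpha>" by (rule hd_pos[OF assms(1) ne])
  qed auto
qed

lemma obtain_can:
  assumes "is_partition \<alpha>" "0 < weight \<alpha>"
  obtains L \<rho> where "\<alpha> = replicate (mlarge \<alpha>) L @ \<rho>" "is_partition \<rho>" "\<forall>x\<in>set \<rho>. x < L" "0 < L"
    "L = hd \<alpha>" "\<rho> = drop (mlarge \<alpha>) \<alpha>" "0 < mlarge \<alpha>"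
proof -
  have ne: "\<alpha> \<noteq> []" using part_pos assms by blast
  show ?thesis
  proof (rule that[of "hd \<alpha>" "drop (mlarge \<alpha>) \<alpha>"])
    show "\<alpha> = replicate (mlarge \<alpha>) (hd \<alpha>) @ drop (mlarge \<alpha>) \<alpha>" by (rule take_mlarge[OF assms(1) ne order_refl])
    show "is_partition (drop (mlarge \<alpha>) \<alpha>)" by (rule part_drop[OF assms(1)])
    show "\<forall>x\<in>set (drop (mlarge \<alpha>) \<alpha>). x < hd \<alpha>" by (rule drop_mlarge_lt[OF assms(1) ne])
    show "0 < hd \<alpha>" by (rule hd_pos[OF assms(1) ne])
    show "0 < mlarge \<alpha>" by (rule mlarge_pos[OF ne])
  qed auto
qed

lemma weight_pos_rep: "0 < m \<Longrightarrow> 0 < L \<Longrightarrow> 0 < weight (replicate m L @ \<rho>)"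
  by (simp add: weight_rep)

lemma QM:
  assumes "0 < m" "is_partition \<rho>" "\<forall>x\<in>set \<rho>. x \<le> L" "0 < L" "sp (t#\<sigma>)"
  shows "replicate m L @ \<rho> \<in> QSet (t#\<sigma>) (Suc t#\<sigma>) \<longleftrightarrow> ok (set \<rho>) t \<sigma> L \<and> \<not> ok (set \<rho>) (Suc t) \<sigma> L"
  using M1[OF assms] M1[OF assms(1-4) sp_Suc[OF assms(5)]] part_rep[OF assms(2,3,4)] weight_pos_rep[OF assms(1,4)]
  by (simp add: QSet_def avoids_def)

definition Dset :: "nat \<Rightarrow> nat list \<Rightarrow> nat list set" where
  "Dset t \<sigma> = {\<gamma>. is_partition \<gamma> \<and> 0 < weight \<gamma> \<and> contains \<gamma> (t#\<sigma>) \<and> avoids \<gamma> (Suc t#t#\<sigma>)}"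

lemma DM:
  assumes "0 < m" "is_partition \<rho>" "\<forall>x\<in>set \<rho>. x \<le> L" "0 < L" "sp (t#\<sigma>)"
  shows "replicate m L @ \<rho> \<in> Dset t \<sigma> \<longleftrightarrow> ok (set \<rho>) t \<sigma> L \<and> (\<forall>v\<in>set \<rho>. v < L \<longrightarrow> \<not> ok (set \<rho>) t \<sigma> v)"
proof -
  have c2: "contains (replicate m L @ \<rho>) (Suc t#t#\<sigma>) \<longleftrightarrow> Suc t \<le> L \<and> (\<exists>v\<in>set \<rho>. ok (set \<rho>) t \<sigma> v \<and> v + Suc t \<le> L + t)"
    by (rule M2[OF assms]) simp
  have "contains (replicate m L @ \<rho>) (Suc t#t#\<sigma>) \<longleftrightarrow> (\<exists>v\<in>set \<rho>. v < L \<and> ok (set \<rho>) t \<sigma> v)"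
  proof
    assume "contains (replicate m L @ \<rho>) (Suc t#t#\<sigma>)"
    then obtain v where "v\<in>set \<rho>" "ok (set \<rho>) t \<sigma> v" "v + Suc t \<le> L + t" unfolding c2 by blast
    thus "\<exists>v\<in>set \<rho>. v < L \<and> ok (set \<rho>) t \<sigma> v" by (intro bexI[of _ v]) auto
  next
    assume "\<exists>v\<in>set \<rho>. v < L \<and> ok (set \<rho>) t \<sigma> v"
    then obtain v where v: "v\<in>set \<rho>" "ok (set \<rho>) t \<sigma> v" "v < L" by blast
    have "t \<le> v" using ok_ge[OF v(2)] .
    thus "contains (replicate m L @ \<rho>) (Suc t#t#\<sigma>)" unfolding c2 using v by auto
  qed
  thus ?thesis
    using M1[OF assms] part_rep[OF assms(2,3,4)] weight_pos_rep[OF assms(1,4)]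
    by (auto simp: Dset_def avoids_def)
qed

lemma Q2M:
  assumes "0 < m" "is_partition \<rho>" "\<forall>x\<in>set \<rho>. x \<le> L" "0 < L" "sp (t#\<sigma>)"
  shows "replicate m L @ \<rho> \<in> QSet (Suc t#t#\<sigma>) (Suc (Suc t)#t#\<sigma>) \<longleftrightarrow>
     Suc t \<le> L \<and> (\<exists>v\<in>set \<rho>. ok (set \<rho>) t \<sigma> v \<and> v + 1 \<le> L) \<and>
     \<not> (Suc (Suc t) \<le> L \<and> (\<exists>v\<in>set \<rho>. ok (set \<rho>) t \<sigma> v \<and> v + 2 \<le> L))"
proof -
  have c1: "contains (replicate m L @ \<rho>) (Suc t#t#\<sigma>) \<longleftrightarrow> Suc t \<le> L \<and> (\<exists>v\<in>set \<rho>. ok (set \<rho>) t \<sigma> v \<and> v + Suc t \<le> L + t)"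
    by (rule M2[OF assms]) simp
  have c2: "contains (replicate m L @ \<rho>) (Suc (Suc t)#t#\<sigma>) \<longleftrightarrow> Suc (Suc t) \<le> L \<and> (\<exists>v\<in>set \<rho>. ok (set \<rho>) t \<sigma> v \<and> v + Suc (Suc t) \<le> L + t)"
    by (rule M2[OF assms]) simp
  show ?thesis
    using c1 c2 part_rep[OF assms(2,3,4)] weight_pos_rep[OF assms(1,4)]
    by (simp add: QSet_def avoids_def)
qed


lemma length_le_sum: "\<forall>x\<in>set xs. 0 < (x::nat) \<Longrightarrow> length xs \<le> sum_list xs"
  by (induction xs) auto

lemma finite_parts: "finite {\<alpha>. is_partition \<alpha> \<and> weight \<alpha> = n}"
proof (rule finite_subset)
  show "{\<alpha>. is_partition \<alpha> \<and> weight \<alpha> = n} \<subseteq> {xs. set xs \<subseteq> {..n} \<and> length xs \<le> n}"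
  proof
    fix \<alpha> assume a: "\<alpha> \<in> {\<alpha>. is_partition \<alpha> \<and> weight \<alpha> = n}"
    hence p: "is_partition \<alpha>" "sum_list \<alpha> = n" by (auto simp: weight_def)
    have "\<forall>x\<in>set \<alpha>. 0 < x" using p(1) by (auto simp: is_partition_def) (metis gr0I)
    hence "length \<alpha> \<le> n" using length_le_sum p(2) by metis
    moreover have "set \<alpha> \<subseteq> {..n}" using p(2) member_le_sum_list by fastforce
    ultimately show "\<alpha> \<in> {xs. set xs \<subseteq> {..n} \<and> length xs \<le> n}" by simp
  qed
  show "finite {xs. set xs \<subseteq> {..n} \<and> length xs \<le> n}" by (rule finite_lists_length_le) simp
qed

lemma finite_wk: "finite {\<alpha>\<in>X. is_partition \<alpha> \<and> weight \<alpha> = n}"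
  by (rule finite_subset[OF _ finite_parts[of n]]) auto

lemma finite_wk2: "finite {\<alpha>\<in>QSet a b. P \<alpha> \<and> weight \<alpha> = n}"
  by (rule finite_subset[OF _ finite_parts[of n]]) (auto simp: QSet_def)

lemma contains_Suc_imp:
  assumes "is_partition \<alpha>" "\<alpha> \<noteq> []" "sp (t#\<sigma>)" "contains \<alpha> (Suc t#\<sigma>)"
  shows "contains \<alpha> (t#\<sigma>)"
proof -
  have "ok (set \<alpha>) (Suc t) \<sigma> (hd \<alpha>)" using contains_cons[OF assms(1,2) sp_Suc[OF assms(3)]] assms(4) by simp
  hence "ok (set \<alpha>) t \<sigma> (hd \<alpha> - 1)" by (simp add: ok_Suc)
  hence "ok (set \<alpha>) t \<sigma> (hd \<alpha>)" by (rule ok_mono) simp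
  thus ?thesis using contains_cons[OF assms(1,2,3)] by simp
qed

lemma E0:
  assumes "sp (t#\<sigma>)"
  shows "AvSet (Suc t#\<sigma>) = AvSet (t#\<sigma>) \<union> QSet (t#\<sigma>) (Suc t#\<sigma>)"
    "AvSet (t#\<sigma>) \<inter> QSet (t#\<sigma>) (Suc t#\<sigma>) = {}"
proof -
  have "\<And>\<alpha>. is_partition \<alpha> \<Longrightarrow> 0 < weight \<alpha> \<Longrightarrow> contains \<alpha> (Suc t#\<sigma>) \<Longrightarrow> contains \<alpha> (t#\<sigma>)"
    using contains_Suc_imp[OF _ _ assms] part_pos by blast
  thus "AvSet (Suc t#\<sigma>) = AvSet (t#\<sigma>) \<union> QSet (t#\<sigma>) (Suc t#\<sigma>)"
    unfolding AvSet_def QSet_def avoids_def by blast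
  show "AvSet (t#\<sigma>) \<inter> QSet (t#\<sigma>) (Suc t#\<sigma>) = {}"
    unfolding AvSet_def QSet_def avoids_def by blast
qed

lemma E1:
  assumes sp: "sp (t#\<sigma>)" and j: "0 < j"
  shows "card {\<gamma>\<in>QSet (Suc t#\<sigma>) (Suc (Suc t)#\<sigma>). weight \<gamma> = k \<and> mlarge \<gamma> = j}
       = card {\<alpha>\<in>QSet (t#\<sigma>) (Suc t#\<sigma>). weight \<alpha> + j = k \<and> j \<le> mlarge \<alpha>}"
proof -
  let ?A = "{\<alpha>\<in>QSet (t#\<sigma>) (Suc t#\<sigma>). weight \<alpha> + j = k \<and> j \<le> mlarge \<alpha>}"
  let ?B = "{\<gamma>\<in>QSet (Suc t#\<sigma>) (Suc (Suc t)#\<sigma>). weight \<gamma> = k \<and> mlarge \<gamma> = j}"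
  define f where "f \<alpha> = replicate j (Suc (hd \<alpha>)) @ drop j \<alpha>" for \<alpha> :: "nat list"
  define g where "g \<gamma> = replicate j (hd \<gamma> - 1) @ drop j \<gamma>" for \<gamma> :: "nat list"
  have sp1: "sp (Suc t#\<sigma>)" using sp_Suc[OF sp] .
  have t0: "0 < t" using sp_pos[OF sp] .
  have A: "f a \<in> ?B \<and> g (f a) = a" if a: "a \<in> ?A" for a
  proof -
    have pa: "is_partition a" "0 < weight a" using a by (auto simp: QSet_def)
    obtain L \<rho> where d: "a = replicate j L @ \<rho>" "is_partition \<rho>" "\<forall>x\<in>set \<rho>. x \<le> L" "0 < L"
      "L = hd a" "\<rho> = drop j a"
      using obtain_dec[OF pa j] a by blast
    have fa: "f a = replicate j (Suc L) @ \<rho>" by (simp add: f_def d(5,6))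
    have "replicate j L @ \<rho> \<in> QSet (t#\<sigma>) (Suc t#\<sigma>)" using a d(1) by simp
    hence okk: "ok (set \<rho>) t \<sigma> L" "\<not> ok (set \<rho>) (Suc t) \<sigma> L" using QM[OF j d(2,3,4) sp] by auto
    have le2: "\<forall>x\<in>set \<rho>. x \<le> Suc L" using d(3) by auto
    have "replicate j (Suc L) @ \<rho> \<in> QSet (Suc t#\<sigma>) (Suc (Suc t)#\<sigma>)"
      using QM[OF j d(2) le2 _ sp1] okk by (simp add: ok_Suc)
    moreover have "weight (replicate j (Suc L) @ \<rho>) = k"
      using a d(1) by (simp add: weight_rep)
    moreover have "mlarge (replicate j (Suc L) @ \<rho>) = j"
      using d(3) j by (intro mlarge_rep) auto
    ultimately have "f a \<in> ?B" unfolding fa by simp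
    moreover have "g (f a) = a" unfolding fa g_def using j d(1) by (simp add: hd_rep)
    ultimately show ?thesis by simp
  qed
  have B: "g b \<in> ?A \<and> f (g b) = b" if b: "b \<in> ?B" for b
  proof -
    have pb: "is_partition b" "0 < weight b" "mlarge b = j" using b by (auto simp: QSet_def)
    obtain L \<rho> where d: "b = replicate (mlarge b) L @ \<rho>" "is_partition \<rho>" "\<forall>x\<in>set \<rho>. x < L" "0 < L"
      "L = hd b" "\<rho> = drop (mlarge b) b"
      using obtain_can[OF pb(1,2)] by blast
    have le: "\<forall>x\<in>set \<rho>. x \<le> L" using d(3) by auto
    have gb: "g b = replicate j (L - 1) @ \<rho>" by (simp add: g_def d(5,6) pb(3))
    have "replicate j L @ \<rho> \<in> QSet (Suc t#\<sigma>) (Suc (Suc t)#\<sigma>)" using b d(1) pb(3) by simp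
    hence okk: "ok (set \<rho>) (Suc t) \<sigma> L" "\<not> ok (set \<rho>) (Suc (Suc t)) \<sigma> L" using QM[OF j d(2) le d(4) sp1] by auto
    hence ok2: "ok (set \<rho>) t \<sigma> (L - 1)" "\<not> ok (set \<rho>) (Suc t) \<sigma> (L - 1)" using d(4) by (auto simp: ok_Suc)
    have L1: "0 < L - 1" using ok_ge[OF ok2(1)] t0 by linarith
    have le2: "\<forall>x\<in>set \<rho>. x \<le> L - 1" using d(3) by auto
    have "replicate j (L - 1) @ \<rho> \<in> QSet (t#\<sigma>) (Suc t#\<sigma>)"
      using QM[OF j d(2) le2 L1 sp] ok2 by simp
    moreover have "weight (replicate j (L - 1) @ \<rho>) + j = k"
    proof -
      have "weight b = j * L + weight \<rho>" using d(1) pb(3) by (simp add: weight_rep)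
      moreover have "j * (L - 1) + j = j * L" using d(4) by (cases L) auto
      ultimately show ?thesis using b by (simp add: weight_rep)
    qed
    moreover have "j \<le> mlarge (replicate j (L - 1) @ \<rho>)" by (rule mlarge_rep_ge[OF j])
    ultimately have "g b \<in> ?A" unfolding gb by simp
    moreover have "f (g b) = b" unfolding gb f_def using j d(1,4) pb(3) by (simp add: hd_rep)
    ultimately show ?thesis by simp
  qed
  have "bij_betw f ?A ?B"
    by (rule bij_betw_byWitness[where f' = g]) (use A B in auto)
  thus ?thesis by (simp add: bij_betw_same_card)
qed


lemma contains_cons_imp:
  assumes "is_partition \<gamma>" "sp (s#t#\<sigma>)" "contains \<gamma> (s#t#\<sigma>)"
  shows "contains \<gamma> (t#\<sigma>)"
proof -
  have spt: "sp (t#\<sigma>)" using assms(2) by (auto simp: sp_def)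
  obtain e where "ch (set \<gamma>) (s#t#\<sigma>) e"
    using contains_iff_ch[OF assms(1)] assms(2,3) by (auto simp: sp_def)
  then obtain v where "ch (set \<gamma>) (t#\<sigma>) (v - s)" by auto
  thus ?thesis using contains_iff_ch[OF assms(1)] spt by (auto simp: sp_def)
qed

lemma N0:
  assumes "sp (t#\<sigma>)"
  shows "AvSet (Suc t#t#\<sigma>) = AvSet (t#\<sigma>) \<union> Dset t \<sigma>"
    "AvSet (t#\<sigma>) \<inter> Dset t \<sigma> = {}"
proof -
  have "\<And>\<alpha>. is_partition \<alpha> \<Longrightarrow> contains \<alpha> (Suc t#t#\<sigma>) \<Longrightarrow> contains \<alpha> (t#\<sigma>)"
    using contains_cons_imp sp_N1[OF assms] by blast
  thus "AvSet (Suc t#t#\<sigma>) = AvSet (t#\<sigma>) \<union> Dset t \<sigma>"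
    unfolding AvSet_def Dset_def avoids_def by blast
  show "AvSet (t#\<sigma>) \<inter> Dset t \<sigma> = {}"
    unfolding AvSet_def Dset_def avoids_def by blast
qed

definition Wt :: "nat set \<Rightarrow> nat \<Rightarrow> nat list \<Rightarrow> nat" where
  "Wt S t \<sigma> = (LEAST v. ok S t \<sigma> v)"

lemma Wt_ok: "ok S t \<sigma> v \<Longrightarrow> ok S t \<sigma> (Wt S t \<sigma>)"
  unfolding Wt_def by (rule LeastI)

lemma Wt_le: "ok S t \<sigma> v \<Longrightarrow> Wt S t \<sigma> \<le> v"
  unfolding Wt_def by (rule Least_le)

lemma ND:
  assumes sp: "sp (t#\<sigma>)"
  shows "card {\<gamma>\<in>Dset t \<sigma>. weight \<gamma> = n \<and> P (mlarge \<gamma>)}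
       = card {\<alpha>\<in>QSet (t#\<sigma>) (Suc t#\<sigma>). weight \<alpha> \<le> n \<and> mlarge \<alpha> dvd (n - weight \<alpha>) \<and> P (mlarge \<alpha>)}"
proof -
  let ?A = "{\<alpha>\<in>QSet (t#\<sigma>) (Suc t#\<sigma>). weight \<alpha> \<le> n \<and> mlarge \<alpha> dvd (n - weight \<alpha>) \<and> P (mlarge \<alpha>)}"
  let ?B = "{\<gamma>\<in>Dset t \<sigma>. weight \<gamma> = n \<and> P (mlarge \<gamma>)}"
  define f where "f \<alpha> = replicate (mlarge \<alpha>) (hd \<alpha> + (n - weight \<alpha>) div mlarge \<alpha>) @ drop (mlarge \<alpha>) \<alpha>" for \<alpha> :: "nat list"
  define g where "g \<gamma> = replicate (mlarge \<gamma>) (Wt (set (drop (mlarge \<gamma>) \<gamma>)) t \<sigma>) @ drop (mlarge \<gamma>) \<gamma>" for \<gamma> :: "nat list"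
  have t0: "0 < t" using sp_pos[OF sp] .
  have A: "f a \<in> ?B \<and> g (f a) = a" if a: "a \<in> ?A" for a
  proof -
    have pa: "is_partition a" "0 < weight a" using a by (auto simp: QSet_def)
    obtain L \<rho> where d: "a = replicate (mlarge a) L @ \<rho>" "is_partition \<rho>" "\<forall>x\<in>set \<rho>. x < L" "0 < L"
      "L = hd a" "\<rho> = drop (mlarge a) a" "0 < mlarge a"
      using obtain_can[OF pa] by blast
    define m where "m = mlarge a"
    define r where "r = (n - weight a) div m"
    have m0: "0 < m" using d(7) by (simp add: m_def)
    have wa: "weight a = m * L + weight \<rho>" using arg_cong[OF d(1), of weight] by (simp add: weight_rep m_def)
    have nr: "n - weight a = m * r" using a by (simp add: r_def m_def)
    have fa: "f a = replicate m (L + r) @ \<rho>" by (simp add: f_def d(5,6) m_def r_def)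
    have le: "\<forall>x\<in>set \<rho>. x \<le> L" using d(3) by auto
    have "replicate m L @ \<rho> \<in> QSet (t#\<sigma>) (Suc t#\<sigma>)" using a d(1) by (simp add: m_def)
    hence okk: "ok (set \<rho>) t \<sigma> L" "\<not> ok (set \<rho>) t \<sigma> (L - 1)" using QM[OF m0 d(2) le d(4) sp] d(4) by (auto simp: ok_Suc)
    have le2: "\<forall>x\<in>set \<rho>. x \<le> L + r" using d(3) by auto
    have lt2: "\<forall>x\<in>set \<rho>. x < L + r" using d(3) by auto
    have "replicate m (L + r) @ \<rho> \<in> Dset t \<sigma>"
    proof -
      have "ok (set \<rho>) t \<sigma> (L + r)" using ok_mono[OF okk(1)] by simp
      moreover have "\<forall>v\<in>set \<rho>. v < L + r \<longrightarrow> \<not> ok (set \<rho>) t \<sigma> v"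
      proof (intro ballI impI notI)
        fix v assume v: "v \<in> set \<rho>" "ok (set \<rho>) t \<sigma> v"
        have "v \<le> L - 1" using d(3) v(1) by fastforce
        thus False using ok_mono[OF v(2)] okk(2) by blast
      qed
      ultimately show ?thesis using DM[OF m0 d(2) le2 _ sp] d(4) by simp
    qed
    moreover have "weight (replicate m (L + r) @ \<rho>) = n"
    proof -
      have "weight a \<le> n" using a by simp
      hence h: "n = weight a + m * r" using nr by linarith
      have "weight (replicate m (L + r) @ \<rho>) = m * L + m * r + weight \<rho>" by (simp add: weight_rep distrib_left)
      thus ?thesis using h wa by simp
    qed
    moreover have "mlarge (replicate m (L + r) @ \<rho>) = m" by (rule mlarge_rep[OF m0 lt2])
    moreover have "P m" using a by (simp add: m_def)
    ultimately have "f a \<in> ?B" unfolding fa by simp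
    moreover have "g (f a) = a"
    proof -
      have W: "Wt (set \<rho>) t \<sigma> = L"
        unfolding Wt_def
      proof (rule Least_equality)
        show "ok (set \<rho>) t \<sigma> L" by (rule okk(1))
        fix y assume yok: "ok (set \<rho>) t \<sigma> y"
        show "L \<le> y"
        proof (rule ccontr)
          assume "\<not> L \<le> y"
          hence "y \<le> L - 1" by linarith
          hence "ok (set \<rho>) t \<sigma> (L - 1)" by (rule ok_mono[OF yok])
          thus False using okk(2) by simp
        qed
      qed
      show ?thesis unfolding fa g_def using mlarge_rep[OF m0 lt2] W d(1) by (simp add: m_def)
    qed
    ultimately show ?thesis by simp
  qed
  have B: "g b \<in> ?A \<and> f (g b) = b" if b: "b \<in> ?B" for b
  proof -
    have pb: "is_partition b" "0 < weight b" using b by (auto simp: Dset_def)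
    obtain L \<rho> where d: "b = replicate (mlarge b) L @ \<rho>" "is_partition \<rho>" "\<forall>x\<in>set \<rho>. x < L" "0 < L"
      "L = hd b" "\<rho> = drop (mlarge b) b" "0 < mlarge b"
      using obtain_can[OF pb] by blast
    define m where "m = mlarge b"
    have m0: "0 < m" using d(7) by (simp add: m_def)
    have le: "\<forall>x\<in>set \<rho>. x \<le> L" using d(3) by auto
    have "replicate m L @ \<rho> \<in> Dset t \<sigma>" using b d(1) by (simp add: m_def)
    hence okk: "ok (set \<rho>) t \<sigma> L" "\<forall>v\<in>set \<rho>. \<not> ok (set \<rho>) t \<sigma> v"
      using DM[OF m0 d(2) le d(4) sp] d(3) by auto
    define W where "W = Wt (set \<rho>) t \<sigma>"
    have okW: "ok (set \<rho>) t \<sigma> W" using Wt_ok[OF okk(1)] by (simp add: W_def)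
    have WL: "W \<le> L" using Wt_le[OF okk(1)] by (simp add: W_def)
    have ltW: "\<forall>x\<in>set \<rho>. x < W"
    proof
      fix x assume x: "x \<in> set \<rho>"
      show "x < W"
      proof (rule ccontr)
        assume "\<not> x < W" hence "ok (set \<rho>) t \<sigma> x" using ok_mono[OF okW] by simp
        thus False using okk(2) x by blast
      qed
    qed
    have W0: "0 < W" using ok_ge[OF okW] t0 by linarith
    have gb: "g b = replicate m W @ \<rho>" by (simp add: g_def d(6) m_def W_def)
    have leW: "\<forall>x\<in>set \<rho>. x \<le> W" using ltW by auto
    have "replicate m W @ \<rho> \<in> QSet (t#\<sigma>) (Suc t#\<sigma>)"
    proof -
      have "\<not> ok (set \<rho>) (Suc t) \<sigma> W"
      proof
        assume "ok (set \<rho>) (Suc t) \<sigma> W"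
        hence "ok (set \<rho>) t \<sigma> (W - 1)" by (simp add: ok_Suc)
        hence "W \<le> W - 1" using Wt_le by (simp add: W_def)
        thus False using W0 by linarith
      qed
      thus ?thesis using QM[OF m0 d(2) leW W0 sp] okW by simp
    qed
    moreover have wb: "weight b = m * L + weight \<rho>" using arg_cong[OF d(1), of weight] by (simp add: weight_rep m_def)
    moreover have wg: "weight (replicate m W @ \<rho>) = m * W + weight \<rho>" by (simp add: weight_rep)
    moreover have nd: "n - (m * W + weight \<rho>) = m * (L - W)"
    proof -
      have nn: "n = m * L + weight \<rho>" using b wb by simp
      have "n - (m * W + weight \<rho>) = m * L - m * W" unfolding nn by simp
      also have "\<dots> = m * (L - W)" by (simp add: diff_mult_distrib2)
      finally show ?thesis .
    qed
    moreover have "mlarge (replicate m W @ \<rho>) = m" by (rule mlarge_rep[OF m0 ltW])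
    moreover have "P m" using b by (simp add: m_def)
    moreover have "m * W + weight \<rho> \<le> n"
    proof -
      have "m * W \<le> m * L" using WL by simp
      moreover have "weight b = n" using b by simp
      ultimately show ?thesis using wb by linarith
    qed
    ultimately have "g b \<in> ?A" unfolding gb by simp
    moreover have "f (g b) = b"
    proof -
      have "(n - weight (replicate m W @ \<rho>)) div m = L - W" using nd wg m0 by simp
      thus ?thesis unfolding gb f_def using mlarge_rep[OF m0 ltW] d(1) WL m0 by (simp add: hd_rep m_def)
    qed
    ultimately show ?thesis by simp
  qed
  have "bij_betw f ?A ?B"
    by (rule bij_betw_byWitness[where f' = g]) (use A B in auto)
  thus ?thesis by (simp add: bij_betw_same_card)
qed

lemma drop_rep_Suc: "drop j (replicate (Suc j) h @ X) = h # X"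
  by (induction j) auto

lemma N1:
  assumes sp: "sp (t#\<sigma>)" and j: "0 < j"
  shows "card {\<gamma>\<in>QSet (Suc t#t#\<sigma>) (Suc (Suc t)#t#\<sigma>). weight \<gamma> = k \<and> mlarge \<gamma> = j}
       = card {\<delta>\<in>Dset t \<sigma>. weight \<delta> + j = k \<and> j < mlarge \<delta>}"
proof -
  let ?A = "{\<delta>\<in>Dset t \<sigma>. weight \<delta> + j = k \<and> j < mlarge \<delta>}"
  let ?B = "{\<gamma>\<in>QSet (Suc t#t#\<sigma>) (Suc (Suc t)#t#\<sigma>). weight \<gamma> = k \<and> mlarge \<gamma> = j}"
  define f where "f \<alpha> = replicate j (Suc (hd \<alpha>)) @ drop j \<alpha>" for \<alpha> :: "nat list"
  define g where "g \<gamma> = replicate j (hd \<gamma> - 1) @ drop j \<gamma>" for \<gamma> :: "nat list"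
  have t0: "0 < t" using sp_pos[OF sp] .
  have A: "f a \<in> ?B \<and> g (f a) = a" if a: "a \<in> ?A" for a
  proof -
    have pa: "is_partition a" "0 < weight a" "j < mlarge a" using a by (auto simp: Dset_def)
    obtain L \<rho> where d: "a = replicate j L @ \<rho>" "is_partition \<rho>" "\<forall>x\<in>set \<rho>. x \<le> L" "0 < L"
      "L = hd a" "\<rho> = drop j a"
      using obtain_dec[OF pa(1,2) j less_imp_le[OF pa(3)]] by blast
    have ne: "a \<noteq> []" using part_pos pa by blast
    have e2: "a = replicate (Suc j) (hd a) @ drop (Suc j) a"
      by (rule take_mlarge[OF pa(1) ne]) (use pa(3) in simp)
    have "drop j a = drop j (replicate (Suc j) (hd a) @ drop (Suc j) a)" using arg_cong[OF e2, of "drop j"] .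
    also have "\<dots> = hd a # drop (Suc j) a" by (rule drop_rep_Suc)
    finally have "drop j a = hd a # drop (Suc j) a" .
    hence Lin: "L \<in> set \<rho>" using d(5,6) by simp
    have fa: "f a = replicate j (Suc L) @ \<rho>" by (simp add: f_def d(5,6))
    have "replicate j L @ \<rho> \<in> Dset t \<sigma>" using a d(1) by simp
    hence okk: "ok (set \<rho>) t \<sigma> L" "\<forall>v\<in>set \<rho>. v < L \<longrightarrow> \<not> ok (set \<rho>) t \<sigma> v"
      using DM[OF j d(2,3,4) sp] by auto
    have le2: "\<forall>x\<in>set \<rho>. x \<le> Suc L" using d(3) by auto
    have lt2: "\<forall>x\<in>set \<rho>. x < Suc L" using d(3) by auto
    have "replicate j (Suc L) @ \<rho> \<in> QSet (Suc t#t#\<sigma>) (Suc (Suc t)#t#\<sigma>)"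
    proof -
      have "Suc t \<le> Suc L" using ok_ge[OF okk(1)] by simp
      moreover have "\<exists>v\<in>set \<rho>. ok (set \<rho>) t \<sigma> v \<and> v + 1 \<le> Suc L" using Lin okk(1) by auto
      moreover have "\<not> (\<exists>v\<in>set \<rho>. ok (set \<rho>) t \<sigma> v \<and> v + 2 \<le> Suc L)"
      proof
        assume "\<exists>v\<in>set \<rho>. ok (set \<rho>) t \<sigma> v \<and> v + 2 \<le> Suc L"
        then obtain v where v: "v \<in> set \<rho>" "ok (set \<rho>) t \<sigma> v" "v + 2 \<le> Suc L" by blast
        have "v < L" using v(3) by linarith
        thus False using okk(2) v by blast
      qed
      ultimately show ?thesis using Q2M[OF j d(2) le2 _ sp] by simp
    qed
    moreover have "weight (replicate j (Suc L) @ \<rho>) = k"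
      using a d(1) by (simp add: weight_rep)
    moreover have "mlarge (replicate j (Suc L) @ \<rho>) = j" by (rule mlarge_rep[OF j lt2])
    ultimately have "f a \<in> ?B" unfolding fa by simp
    moreover have "g (f a) = a" unfolding fa g_def using j d(1) by (simp add: hd_rep)
    ultimately show ?thesis by simp
  qed
  have B: "g b \<in> ?A \<and> f (g b) = b" if b: "b \<in> ?B" for b
  proof -
    have pb: "is_partition b" "0 < weight b" "mlarge b = j" using b by (auto simp: QSet_def)
    obtain L \<rho> where d: "b = replicate (mlarge b) L @ \<rho>" "is_partition \<rho>" "\<forall>x\<in>set \<rho>. x < L" "0 < L"
      "L = hd b" "\<rho> = drop (mlarge b) b"
      using obtain_can[OF pb(1,2)] by blast
    have le: "\<forall>x\<in>set \<rho>. x \<le> L" using d(3) by auto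
    have gb: "g b = replicate j (L - 1) @ \<rho>" by (simp add: g_def d(5,6) pb(3))
    have "replicate j L @ \<rho> \<in> QSet (Suc t#t#\<sigma>) (Suc (Suc t)#t#\<sigma>)" using b d(1) pb(3) by simp
    hence q: "Suc t \<le> L" "\<exists>v\<in>set \<rho>. ok (set \<rho>) t \<sigma> v \<and> v + 1 \<le> L"
       "\<not> (Suc (Suc t) \<le> L \<and> (\<exists>v\<in>set \<rho>. ok (set \<rho>) t \<sigma> v \<and> v + 2 \<le> L))"
      using Q2M[OF j d(2) le d(4) sp] by auto
    have no: "\<not> ok (set \<rho>) t \<sigma> v" if "v \<in> set \<rho>" "v + 2 \<le> L" for v
    proof
      assume "ok (set \<rho>) t \<sigma> v"
      moreover have "Suc (Suc t) \<le> L" using ok_ge[OF \<open>ok (set \<rho>) t \<sigma> v\<close>] that(2) by linarith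
      ultimately show False using q(3) that by blast
    qed
    obtain v where v: "v \<in> set \<rho>" "ok (set \<rho>) t \<sigma> v" "v + 1 \<le> L" using q(2) by blast
    have "\<not> v + 2 \<le> L" using no[OF v(1)] v(2) by blast
    hence vL: "v = L - 1" using v(3) by linarith
    have okL: "ok (set \<rho>) t \<sigma> (L - 1)" "L - 1 \<in> set \<rho>" using v vL by auto
    have L1: "0 < L - 1" using ok_ge[OF okL(1)] t0 by linarith
    have le2: "\<forall>x\<in>set \<rho>. x \<le> L - 1" using d(3) by auto
    have "replicate j (L - 1) @ \<rho> \<in> Dset t \<sigma>"
    proof -
      have "\<forall>w\<in>set \<rho>. w < L - 1 \<longrightarrow> \<not> ok (set \<rho>) t \<sigma> w"
      proof (intro ballI impI)
        fix w assume "w \<in> set \<rho>" "w < L - 1"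
        moreover have "w + 2 \<le> L" using \<open>w < L - 1\<close> by linarith
        ultimately show "\<not> ok (set \<rho>) t \<sigma> w" using no by blast
      qed
      thus ?thesis using DM[OF j d(2) le2 L1 sp] okL by simp
    qed
    moreover have "weight (replicate j (L - 1) @ \<rho>) + j = k"
    proof -
      have "weight b = j * L + weight \<rho>" using d(1) pb(3) by (simp add: weight_rep)
      moreover have "j * (L - 1) + j = j * L" using d(4) by (cases L) auto
      ultimately show ?thesis using b by (simp add: weight_rep)
    qed
    moreover have "j < mlarge (replicate j (L - 1) @ \<rho>)" by (rule mlarge_rep_gt[OF j okL(2)])
    ultimately have "g b \<in> ?A" unfolding gb by simp
    moreover have "f (g b) = b" unfolding gb f_def using j d(1,4) pb(3) by (simp add: hd_rep)
    ultimately show ?thesis by simp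
  qed
  have "bij_betw f ?A ?B"
    by (rule bij_betw_byWitness[where f' = g]) (use A B in auto)
  thus ?thesis by (simp add: bij_betw_same_card)
qed



lemma inv1_right: "f $ 0 = 1 \<Longrightarrow> f * inv1 f = 1"
  unfolding inv1_def by (rule fps_right_inverse) simp

lemma TX_nth: "(F * (Tvar * fps_X)) $ k = (if k = 0 then 0 else pCons 0 (F $ (k - 1)))"
proof -
  have eq: "F * (Tvar * fps_X) = (F * fps_X) * fps_const [:0, 1:]" by (simp add: Tvar_def mult_ac)
  have "(F * (Tvar * fps_X)) $ k = ((F * fps_X) * fps_const [:0, 1:]) $ k" by (simp only: eq)
  also have "\<dots> = (F * fps_X) $ k * [:0,1:]" by (rule fps_mult_right_const_nth)
  also have "\<dots> = (if k = 0 then 0 else F $ (k - 1) * [:0,1:])" by simp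
  also have "\<dots> = (if k = 0 then 0 else pCons 0 (F $ (k - 1)))" by (simp add: mult_pCons_right)
  finally show ?thesis .
qed

lemma coeff_sum_monom_delta:
  "coeff (\<Sum>j\<le>k. monom (a j) j) i = (if i \<le> k then a i else 0)"
  by (simp add: coeff_sum coeff_monom)

lemma at_zt_coeff:
  "coeff (at_zt G $ k) i = (if i \<le> k then coeff (G $ (k - i)) i else 0)"
proof -
  have "coeff (at_zt G $ k) i = (\<Sum>n\<le>k. if k - n = i then coeff (G $ n) (k - n) else 0)"
    by (simp add: at_zt_def coeff_sum coeff_monom)
  also have "\<dots> = (\<Sum>n\<le>k. if n = k - i \<and> i \<le> k then coeff (G $ (k - i)) i else 0)"
    by (rule sum.cong) auto
  also have "\<dots> = (if i \<le> k then coeff (G $ (k - i)) i else 0)"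
    by (cases "i \<le> k") (simp_all add: sum.delta)
  finally show ?thesis .
qed

lemma poly_one_sum:
  fixes p :: "int poly"
  assumes "degree p \<le> k"
  shows "poly p 1 = (\<Sum>m\<le>k. coeff p m)"
proof -
  have "poly p 1 = (\<Sum>m\<le>degree p. coeff p m)" by (subst poly_altdef) simp
  also have "\<dots> = (\<Sum>m\<le>k. coeff p m)"
    by (rule sum.mono_neutral_left) (use assms in \<open>auto simp: coeff_eq_0\<close>)
  finally show ?thesis .
qed

definition Ecoef :: "bser \<Rightarrow> nat \<Rightarrow> int poly" where
  "Ecoef G k = (\<Sum>j\<le>k. monom (\<Sum>m=j..k-j. coeff (G $ (k - j)) m) j)"

lemma opE_eq:
  assumes deg: "\<And>n. degree (G $ n) \<le> n"
  shows "opE G = Abs_fps (Ecoef G)"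
proof -
  define H where "H = Abs_fps (Ecoef G)"
  have cH: "coeff (H $ k) i = (if i \<le> k then (\<Sum>m=i..k-i. coeff (G $ (k - i)) m) else 0)" for k i
    by (simp add: H_def Ecoef_def coeff_sum_monom_delta)
  have key: "H * (1 - Tvar * fps_X) = at_t1 G - Tvar * fps_X * at_zt G"
  proof (rule fps_ext)
    fix k
    have l: "(H * (1 - Tvar * fps_X)) $ k = H $ k - (H * (Tvar * fps_X)) $ k"
      by (simp add: right_diff_distrib)
    have r: "(at_t1 G - Tvar * fps_X * at_zt G) $ k = [:poly (G $ k) 1:] - (at_zt G * (Tvar * fps_X)) $ k"
      by (simp add: at_t1_def mult.commute)
    show "(H * (1 - Tvar * fps_X)) $ k = (at_t1 G - Tvar * fps_X * at_zt G) $ k"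
      unfolding l r TX_nth
    proof (rule poly_eqI)
      fix i
      show "coeff (H $ k - (if k = 0 then 0 else pCons 0 (H $ (k - 1)))) i =
            coeff ([:poly (G $ k) 1:] - (if k = 0 then 0 else pCons 0 (at_zt G $ (k - 1)))) i"
      proof (cases "i = 0")
        case True
        thus ?thesis using cH[of k 0] poly_one_sum[OF deg[of k]] by (simp add: atLeast0AtMost)
      next
        case False
        then obtain i' where i': "i = Suc i'" by (cases i) auto
        show ?thesis
        proof (cases "k = 0")
          case True thus ?thesis using cH[of 0 i] i' by simp
        next
          case False
          have z: "coeff (G $ (k - i)) i' = 0" if "k - i < i'" "i \<le> k" for k
            using deg[of "k - i"] that by (simp add: coeff_eq_0)
          show ?thesis
          proof (cases "i \<le> k")
            case ik: True
            have e: "k - 1 - i' = k - i" using i' by simp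
            have "(\<Sum>m=i'..k-i. coeff (G $ (k - i)) m) = coeff (G $ (k - i)) i' + (\<Sum>m=i..k-i. coeff (G $ (k - i)) m)"
            proof (cases "i' \<le> k - i")
              case True thus ?thesis using i' by (simp add: sum.atLeast_Suc_atMost)
            next
              case f: False
              hence "k - i < i'" by simp
              thus ?thesis using z[of k] ik f i' by simp
            qed
            moreover have "i' \<le> k - 1" using ik i' by simp
            ultimately show ?thesis using cH[of k i] cH[of "k - 1" i'] ik i' False e
              by (simp add: at_zt_coeff)
          next
            case ik: False
            thus ?thesis using cH[of k i] cH[of "k - 1" i'] i' False
              by (simp add: at_zt_coeff)
          qed
        qed
      qed
    qed
  qed
  have one: "(1 - Tvar * fps_X) * inv1 (1 - Tvar * fps_X) = 1"
    by (rule inv1_right) simp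
  have "opE G = H * (1 - Tvar * fps_X) * inv1 (1 - Tvar * fps_X)"
    unfolding opE_def key ..
  also have "\<dots> = H" by (simp add: mult.assoc one)
  finally show ?thesis by (simp add: H_def)
qed



definition Vs :: "nat \<Rightarrow> bser" where "Vs m = Abs_fps (\<lambda>k. if m dvd k then 1 else 0)"

lemma Vs_mult: assumes "0 < m" shows "Vs m * (1 - fps_X ^ m) = 1"
proof (rule fps_ext)
  fix k
  have "(Vs m * (1 - fps_X ^ m)) $ k = Vs m $ k - (Vs m * fps_X ^ m) $ k" by (simp add: right_diff_distrib)
  also have "\<dots> = (if m dvd k then 1 else 0) - (if k < m then 0 else (if m dvd (k - m) then 1 else 0))"
    by (simp add: Vs_def fps_X_power_mult_right_nth)
  also have "\<dots> = (1 :: bser) $ k"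
  proof (cases "k < m")
    case True thus ?thesis using assms by (cases "k = 0") (auto dest: dvd_imp_le)
  next
    case False
    hence "m dvd k \<longleftrightarrow> m dvd (k - m)" by (simp add: dvd_minus_self)
    thus ?thesis using False assms by auto
  qed
  finally show "(Vs m * (1 - fps_X ^ m)) $ k = (1 :: bser) $ k" .
qed

lemma inv_unique: "(V::bser) * f = 1 \<Longrightarrow> f $ 0 = 1 \<Longrightarrow> inv1 f = V"
proof -
  assume a: "V * f = 1" "f $ 0 = 1"
  have "inv1 f = (V * f) * inv1 f" using a by simp
  also have "\<dots> = V * (f * inv1 f)" by (simp add: mult.assoc)
  also have "\<dots> = V" using inv1_right[OF a(2)] by simp
  finally show ?thesis .
qed

lemma inv1_Xm: "0 < m \<Longrightarrow> inv1 (1 - fps_X ^ m) = Vs m"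
  by (rule inv_unique[OF Vs_mult]) auto

lemma TXpow: "(Tvar * fps_X) ^ j = fps_const (monom 1 j) * fps_X ^ j"
  by (simp add: Tvar_def power_mult_distrib fps_const_power monom_altdef)

definition Ps :: "nat \<Rightarrow> bser" where "Ps m = (\<Sum>j<m. (Tvar * fps_X) ^ j)"

lemma Ps_nth: "Ps m $ i = (if i < m then monom 1 i else 0)"
proof -
  have "Ps m $ i = (\<Sum>j<m. (fps_const (monom 1 j) * fps_X ^ j) $ i)"
    by (simp add: Ps_def TXpow fps_sum_nth)
  also have "\<dots> = (\<Sum>j<m. if j = i then monom 1 j else 0)"
    by (rule sum.cong) (auto simp: fps_X_power_nth)
  also have "\<dots> = (if i < m then monom 1 i else 0)" by (simp add: sum.delta)
  finally show ?thesis .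
qed

lemma geo_part: "(1 - (Tvar * fps_X) ^ m) * inv1 (1 - Tvar * fps_X) = Ps m"
proof -
  have "1 - (Tvar * fps_X) ^ m = (1 - Tvar * fps_X) * Ps m"
    unfolding Ps_def by (rule one_diff_power_eq)
  hence "(1 - (Tvar * fps_X) ^ m) * inv1 (1 - Tvar * fps_X) = Ps m * ((1 - Tvar * fps_X) * inv1 (1 - Tvar * fps_X))"
    by (simp add: mult_ac)
  also have "(1 - Tvar * fps_X) * inv1 (1 - Tvar * fps_X) = 1" by (rule inv1_right) simp
  finally show ?thesis by simp
qed

lemma VP_coeff: "coeff ((Vs m * Ps m) $ i) j = (if j \<le> i \<and> j < m \<and> m dvd (i - j) then 1 else 0)"
proof -
  have "(Vs m * Ps m) $ i = (\<Sum>l=0..i. Vs m $ l * Ps m $ (i - l))" by (rule fps_mult_nth)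
  hence "coeff ((Vs m * Ps m) $ i) j = (\<Sum>l=0..i. coeff (Vs m $ l * Ps m $ (i - l)) j)"
    by (simp add: coeff_sum)
  also have "\<dots> = (\<Sum>l=0..i. if l = i - j \<and> j \<le> i \<and> j < m \<and> m dvd (i - j) then 1 else 0)"
    by (rule sum.cong) (auto simp: Vs_def Ps_nth coeff_monom)
  also have "\<dots> = (if j \<le> i \<and> j < m \<and> m dvd (i - j) then 1 else 0)"
  proof (cases "j \<le> i \<and> j < m \<and> m dvd (i - j)")
    case True thus ?thesis by (simp add: sum.delta)
  next
    case False thus ?thesis by (auto intro!: sum.neutral)
  qed
  finally show ?thesis .
qed

lemma Nterm_coeff:
  assumes "0 < m"
  shows "coeff (Nterm a n m $ k) j = (if j < m \<and> j + n \<le> k \<and> m dvd (k - n - j) then a else 0)"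
proof -
  have "Nterm a n m = fps_const [:a:] * ((Vs m * Ps m) * fps_X ^ n)"
    unfolding Nterm_def inv1_Xm[OF assms] geo_part[symmetric] by (simp add: mult_ac)
  hence "Nterm a n m $ k = [:a:] * (if k < n then 0 else (Vs m * Ps m) $ (k - n))"
    by (simp add: fps_X_power_mult_right_nth)
  thus ?thesis by (auto simp: VP_coeff)
qed

lemma opN_coeff:
  assumes deg: "\<And>n. degree (G $ n) \<le> n"
  shows "coeff ((opN G) $ k) j = (if j = 0 then coeff (G $ k) 0 else 0)
     + (\<Sum>n\<in>{1..k}. \<Sum>m\<in>{1..n}. if j < m \<and> j + n \<le> k \<and> m dvd (k - n - j) then coeff (G $ n) m else 0)"
proof -
  have s: "(\<Sum>m\<in>{1..degree (G $ n)}. coeff (Nterm (coeff (G $ n) m) n m $ k) j)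
      = (\<Sum>m\<in>{1..n}. if j < m \<and> j + n \<le> k \<and> m dvd (k - n - j) then coeff (G $ n) m else 0)" for n
  proof -
    have "(\<Sum>m\<in>{1..degree (G $ n)}. coeff (Nterm (coeff (G $ n) m) n m $ k) j)
       = (\<Sum>m\<in>{1..degree (G $ n)}. if j < m \<and> j + n \<le> k \<and> m dvd (k - n - j) then coeff (G $ n) m else 0)"
      by (rule sum.cong) (auto simp: Nterm_coeff)
    also have "\<dots> = (\<Sum>m\<in>{1..n}. if j < m \<and> j + n \<le> k \<and> m dvd (k - n - j) then coeff (G $ n) m else 0)"
      by (rule sum.mono_neutral_left) (use deg[of n] in \<open>auto simp: coeff_eq_0\<close>)
    finally show ?thesis .
  qed
  show ?thesis
    unfolding opN_def using s by (simp add: at_t0_def coeff_sum poly_0_coeff_0 coeff_pCons split: nat.split)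
qed



definition Aset :: "nat list set \<Rightarrow> nat \<Rightarrow> nat list set" where
  "Aset X n = {\<alpha>\<in>X. is_partition \<alpha> \<and> weight \<alpha> = n}"

definition Gs :: "nat list \<Rightarrow> nat list \<Rightarrow> bser" where
  "Gs \<tau> \<mu> = at_t1 (Fser (AvSet \<tau>)) + Fser (QSet \<tau> \<mu>)"

lemma finite_Aset: "finite (Aset X n)"
  unfolding Aset_def by (rule finite_wk)

lemma card_fibers:
  assumes "finite S" "finite T" "f ` S \<subseteq> T"
  shows "(\<Sum>y\<in>T. card {x\<in>S. f x = y}) = card S"
proof -
  have "(\<Sum>y\<in>T. card {x\<in>S. f x = y}) = (\<Sum>y\<in>T. \<Sum>x\<in>{x\<in>S. f x = y}. 1::nat)" by simp
  also have "\<dots> = (\<Sum>x\<in>S. 1::nat)" by (rule sum.group[OF assms])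
  also have "\<dots> = card S" by simp
  finally show ?thesis .
qed

lemma sum_indicator_card:
  "finite A \<Longrightarrow> (\<Sum>x\<in>A. if P x then (1::int) else 0) = int (card {x\<in>A. P x})"
  by (simp add: sum.inter_filter[symmetric])

lemma Fser_nth: "Fser X $ n = (\<Sum>\<alpha>\<in>Aset X n. monom 1 (mlarge \<alpha>))"
  by (simp add: Fser_def Aset_def)

lemma Fser_coeff: "coeff (Fser X $ n) m = int (card {\<alpha>\<in>Aset X n. mlarge \<alpha> = m})"
proof -
  have "coeff (Fser X $ n) m = (\<Sum>\<alpha>\<in>Aset X n. if mlarge \<alpha> = m then 1 else 0)"
    by (simp add: Fser_nth coeff_sum coeff_monom)
  also have "\<dots> = int (card {\<alpha>\<in>Aset X n. mlarge \<alpha> = m})"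
    by (rule sum_indicator_card[OF finite_Aset])
  finally show ?thesis .
qed

lemma at_t1_Fser: "at_t1 (Fser X) $ n = [:int (card (Aset X n)):]"
  by (simp add: at_t1_def Fser_nth poly_sum poly_monom)

lemma ml_le_weight: "is_partition \<alpha> \<Longrightarrow> mlarge \<alpha> \<le> weight \<alpha>"
proof -
  assume p: "is_partition \<alpha>"
  have "mlarge \<alpha> \<le> length \<alpha>" unfolding mlarge_def by (rule length_filter_le)
  also have "length \<alpha> \<le> weight \<alpha>" unfolding weight_def
    by (rule length_le_sum) (use p in \<open>auto simp: is_partition_def intro: gr0I\<close>)
  finally show ?thesis .
qed

lemma ml_pos_Q: "\<alpha> \<in> QSet a b \<Longrightarrow> 0 < mlarge \<alpha>"
  using mlarge_pos part_pos by (auto simp: QSet_def)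

lemma Gs_coeff:
  "coeff (Gs \<tau> \<mu> $ n) m = (if m = 0 then int (card (Aset (AvSet \<tau>) n)) else 0)
        + int (card {\<alpha>\<in>Aset (QSet \<tau> \<mu>) n. mlarge \<alpha> = m})"
  by (simp add: Gs_def at_t1_Fser Fser_coeff coeff_pCons split: nat.split)

lemma Q_ml0: "{\<alpha>\<in>Aset (QSet \<tau> \<mu>) n. mlarge \<alpha> = 0} = {}"
  using ml_pos_Q by (fastforce simp: Aset_def)

lemma Q_ml_big: "n < m \<Longrightarrow> {\<alpha>\<in>Aset (QSet \<tau> \<mu>) n. mlarge \<alpha> = m} = {}"
  using ml_le_weight by (fastforce simp: Aset_def)

lemma Q_ml_big': "n < m \<Longrightarrow> card {\<alpha>\<in>Aset (QSet \<tau> \<mu>) n. mlarge \<alpha> = m} = 0"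
  by (simp only: Q_ml_big card.empty)

lemma Gs_degree: "degree (Gs \<tau> \<mu> $ n) \<le> n"
proof (rule degree_le, intro allI impI)
  fix i assume "n < i"
  thus "coeff (Gs \<tau> \<mu> $ n) i = 0" using Q_ml_big'[of n i \<tau> \<mu>] by (simp add: Gs_coeff)
qed

lemma card_Q_fibers:
  assumes "0 < j"
  shows "(\<Sum>m=j..n. int (card {\<alpha>\<in>Aset (QSet \<tau> \<mu>) n. mlarge \<alpha> = m}))
       = int (card {\<alpha>\<in>Aset (QSet \<tau> \<mu>) n. j \<le> mlarge \<alpha>})"
proof -
  let ?S = "{\<alpha>\<in>Aset (QSet \<tau> \<mu>) n. j \<le> mlarge \<alpha>}"
  have fin: "finite ?S" using finite_Aset by auto
  have im: "mlarge ` ?S \<subseteq> {j..n}" using ml_le_weight by (auto simp: Aset_def)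
  have eq: "{\<alpha>\<in>Aset (QSet \<tau> \<mu>) n. mlarge \<alpha> = m} = {x\<in>?S. mlarge x = m}" if "m \<in> {j..n}" for m
    using that by auto
  have "(\<Sum>m=j..n. int (card {\<alpha>\<in>Aset (QSet \<tau> \<mu>) n. mlarge \<alpha> = m})) = int (\<Sum>m=j..n. card {x\<in>?S. mlarge x = m})"
    using eq by simp
  also have "\<dots> = int (card ?S)" using card_fibers[OF fin _ im] by simp
  finally show ?thesis .
qed

lemma E_step:
  assumes sp: "sp (t#\<sigma>)"
  shows "opE (Gs (t#\<sigma>) (Suc t#\<sigma>)) = Gs (Suc t#\<sigma>) (Suc (Suc t)#\<sigma>)"
proof -
  let ?G = "Gs (t#\<sigma>) (Suc t#\<sigma>)"
  have "opE ?G = Abs_fps (Ecoef ?G)" by (rule opE_eq[OF Gs_degree])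
  also have "\<dots> = Gs (Suc t#\<sigma>) (Suc (Suc t)#\<sigma>)"
  proof (rule fps_ext)
    fix k
    show "Abs_fps (Ecoef ?G) $ k = Gs (Suc t#\<sigma>) (Suc (Suc t)#\<sigma>) $ k"
    proof (rule poly_eqI)
      fix i
      have cE: "coeff (Ecoef ?G k) i = (if i \<le> k then (\<Sum>m=i..k-i. coeff (?G $ (k - i)) m) else 0)"
        by (simp add: Ecoef_def coeff_sum_monom_delta)
      show "coeff (Abs_fps (Ecoef ?G) $ k) i = coeff (Gs (Suc t#\<sigma>) (Suc (Suc t)#\<sigma>) $ k) i"
      proof (cases "i = 0")
        case True
        have s: "(\<Sum>m=0..k. coeff (?G $ k) m) = int (card (Aset (AvSet (t#\<sigma>)) k)) + int (card (Aset (QSet (t#\<sigma>) (Suc t#\<sigma>)) k))"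
        proof -
          have "(\<Sum>m=0..k. coeff (?G $ k) m) = int (card (Aset (AvSet (t#\<sigma>)) k)) + (\<Sum>m=0..k. int (card {\<alpha>\<in>Aset (QSet (t#\<sigma>) (Suc t#\<sigma>)) k. mlarge \<alpha> = m}))"
            by (simp add: Gs_coeff sum.distrib sum.delta)
          also have "(\<Sum>m=0..k. int (card {\<alpha>\<in>Aset (QSet (t#\<sigma>) (Suc t#\<sigma>)) k. mlarge \<alpha> = m}))
              = (\<Sum>m=1..k. int (card {\<alpha>\<in>Aset (QSet (t#\<sigma>) (Suc t#\<sigma>)) k. mlarge \<alpha> = m}))"
            by (simp add: sum.atLeast_Suc_atMost Q_ml0)
          also have "\<dots> = int (card {\<alpha>\<in>Aset (QSet (t#\<sigma>) (Suc t#\<sigma>)) k. 1 \<le> mlarge \<alpha>})"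
            by (rule card_Q_fibers) simp
          also have "{\<alpha>\<in>Aset (QSet (t#\<sigma>) (Suc t#\<sigma>)) k. 1 \<le> mlarge \<alpha>} = Aset (QSet (t#\<sigma>) (Suc t#\<sigma>)) k"
            using ml_pos_Q by (fastforce simp: Aset_def)
          finally show ?thesis .
        qed
        have av: "card (Aset (AvSet (Suc t#\<sigma>)) k) = card (Aset (AvSet (t#\<sigma>)) k) + card (Aset (QSet (t#\<sigma>) (Suc t#\<sigma>)) k)"
        proof -
          have "Aset (AvSet (Suc t#\<sigma>)) k = Aset (AvSet (t#\<sigma>)) k \<union> Aset (QSet (t#\<sigma>) (Suc t#\<sigma>)) k"
            using E0(1)[OF sp] by (auto simp: Aset_def)
          moreover have "Aset (AvSet (t#\<sigma>)) k \<inter> Aset (QSet (t#\<sigma>) (Suc t#\<sigma>)) k = {}"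
            using E0(2)[OF sp] by (auto simp: Aset_def)
          ultimately show ?thesis by (simp add: card_Un_disjoint finite_Aset)
        qed
        show ?thesis using True cE s av by (simp add: Gs_coeff Q_ml0 atLeast0AtMost)
      next
        case False
        show ?thesis
        proof (cases "i \<le> k")
          case ik: True
          have "(\<Sum>m=i..k-i. coeff (?G $ (k - i)) m) = (\<Sum>m=i..k-i. int (card {\<alpha>\<in>Aset (QSet (t#\<sigma>) (Suc t#\<sigma>)) (k - i). mlarge \<alpha> = m}))"
            using False by (intro sum.cong) (auto simp: Gs_coeff)
          also have "\<dots> = int (card {\<alpha>\<in>Aset (QSet (t#\<sigma>) (Suc t#\<sigma>)) (k - i). i \<le> mlarge \<alpha>})"
            using False by (intro card_Q_fibers) simp
          also have "{\<alpha>\<in>Aset (QSet (t#\<sigma>) (Suc t#\<sigma>)) (k - i). i \<le> mlarge \<alpha>}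
               = {\<alpha>\<in>QSet (t#\<sigma>) (Suc t#\<sigma>). weight \<alpha> + i = k \<and> i \<le> mlarge \<alpha>}"
            using ik by (auto simp: Aset_def QSet_def)
          also have "card \<dots> = card {\<gamma>\<in>QSet (Suc t#\<sigma>) (Suc (Suc t)#\<sigma>). weight \<gamma> = k \<and> mlarge \<gamma> = i}"
            using E1[OF sp, of i k] False by simp
          also have "{\<gamma>\<in>QSet (Suc t#\<sigma>) (Suc (Suc t)#\<sigma>). weight \<gamma> = k \<and> mlarge \<gamma> = i}
               = {\<alpha>\<in>Aset (QSet (Suc t#\<sigma>) (Suc (Suc t)#\<sigma>)) k. mlarge \<alpha> = i}"
            by (auto simp: Aset_def QSet_def)
          finally show ?thesis using cE ik False by (simp add: Gs_coeff)
        next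
          case ik: False
          thus ?thesis using cE False Q_ml_big'[of k i "Suc t#\<sigma>" "Suc (Suc t)#\<sigma>"] by (simp add: Gs_coeff)
        qed
      qed
    qed
  qed
  finally show ?thesis .
qed



lemma dsum:
  fixes Q :: "nat list set"
  shows "(\<Sum>n\<in>{1..k}. \<Sum>m\<in>{1..n}. if C n m then int (card {\<alpha>\<in>Aset (QSet a b) n. mlarge \<alpha> = m}) else 0)
     = int (card {\<alpha>\<in>QSet a b. weight \<alpha> \<le> k \<and> C (weight \<alpha>) (mlarge \<alpha>)})"
proof -
  define S where "S n = {\<alpha>\<in>Aset (QSet a b) n. C n (mlarge \<alpha>)}" for n
  have inner: "(\<Sum>m\<in>{1..n}. if C n m then int (card {\<alpha>\<in>Aset (QSet a b) n. mlarge \<alpha> = m}) else 0) = int (card (S n))" for n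
  proof -
    have fin: "finite (S n)" using finite_Aset by (auto simp: S_def)
    have im: "mlarge ` S n \<subseteq> {1..n}" using ml_le_weight ml_pos_Q
      by (auto simp: S_def Aset_def Suc_leI)
    have "(\<Sum>m\<in>{1..n}. if C n m then int (card {\<alpha>\<in>Aset (QSet a b) n. mlarge \<alpha> = m}) else 0)
        = (\<Sum>m\<in>{1..n}. int (card {x\<in>S n. mlarge x = m}))"
    proof (rule sum.cong[OF refl])
      fix m assume "m \<in> {1..n}"
      show "(if C n m then int (card {\<alpha>\<in>Aset (QSet a b) n. mlarge \<alpha> = m}) else 0) = int (card {x\<in>S n. mlarge x = m})"
      proof (cases "C n m")
        case True
        hence "{x\<in>S n. mlarge x = m} = {\<alpha>\<in>Aset (QSet a b) n. mlarge \<alpha> = m}" by (auto simp: S_def)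
        thus ?thesis using True by simp
      next
        case False
        hence E: "{x\<in>S n. mlarge x = m} = {}" by (auto simp: S_def)
        show ?thesis unfolding E using False by simp
      qed
    qed
    also have "\<dots> = int (\<Sum>m\<in>{1..n}. card {x\<in>S n. mlarge x = m})" by simp
    also have "\<dots> = int (card (S n))" using card_fibers[OF fin _ im] by simp
    finally show ?thesis .
  qed
  have "(\<Sum>n\<in>{1..k}. int (card (S n))) = int (\<Sum>n\<in>{1..k}. card (S n))" by simp
  also have "(\<Sum>n\<in>{1..k}. card (S n)) = card (\<Union>n\<in>{1..k}. S n)"
    by (rule card_UN_disjoint[symmetric]) (auto simp: S_def Aset_def intro: finite_subset[OF _ finite_Aset])
  also have "(\<Union>n\<in>{1..k}. S n) = {\<alpha>\<in>QSet a b. weight \<alpha> \<le> k \<and> C (weight \<alpha>) (mlarge \<alpha>)}"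
    by (auto simp: S_def Aset_def QSet_def Suc_leI)
  finally show ?thesis using inner by simp
qed

lemma N_step:
  assumes sp: "sp (t#\<sigma>)"
  shows "opN (Gs (t#\<sigma>) (Suc t#\<sigma>)) = Gs (Suc t#t#\<sigma>) (Suc (Suc t)#t#\<sigma>)"
proof (rule fps_ext, rule poly_eqI)
  fix k j
  let ?G = "Gs (t#\<sigma>) (Suc t#\<sigma>)"
  let ?Q = "QSet (t#\<sigma>) (Suc t#\<sigma>)"
  have "coeff (opN ?G $ k) j = (if j = 0 then coeff (?G $ k) 0 else 0)
     + (\<Sum>n\<in>{1..k}. \<Sum>m\<in>{1..n}. if j < m \<and> j + n \<le> k \<and> m dvd (k - n - j) then coeff (?G $ n) m else 0)"
    by (rule opN_coeff[OF Gs_degree])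
  also have "(\<Sum>n\<in>{1..k}. \<Sum>m\<in>{1..n}. if j < m \<and> j + n \<le> k \<and> m dvd (k - n - j) then coeff (?G $ n) m else 0)
     = (\<Sum>n\<in>{1..k}. \<Sum>m\<in>{1..n}. if j < m \<and> j + n \<le> k \<and> m dvd (k - n - j) then int (card {\<alpha>\<in>Aset ?Q n. mlarge \<alpha> = m}) else 0)"
    by (intro sum.cong refl) (auto simp: Gs_coeff)
  also have "\<dots> = int (card {\<alpha>\<in>?Q. weight \<alpha> \<le> k \<and> (j < mlarge \<alpha> \<and> j + weight \<alpha> \<le> k \<and> mlarge \<alpha> dvd (k - weight \<alpha> - j))})"
    by (rule dsum)
  finally have c: "coeff (opN ?G $ k) j = (if j = 0 then int (card (Aset (AvSet (t#\<sigma>)) k)) else 0)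
     + int (card {\<alpha>\<in>?Q. weight \<alpha> \<le> k \<and> (j < mlarge \<alpha> \<and> j + weight \<alpha> \<le> k \<and> mlarge \<alpha> dvd (k - weight \<alpha> - j))})"
    by (simp add: Gs_coeff Q_ml0)
  show "coeff (opN ?G $ k) j = coeff (Gs (Suc t#t#\<sigma>) (Suc (Suc t)#t#\<sigma>) $ k) j"
  proof (cases "j = 0")
    case True
    have av: "card (Aset (AvSet (Suc t#t#\<sigma>)) k) = card (Aset (AvSet (t#\<sigma>)) k) + card {\<gamma>\<in>Dset t \<sigma>. weight \<gamma> = k \<and> True}"
    proof -
      have "Aset (AvSet (Suc t#t#\<sigma>)) k = Aset (AvSet (t#\<sigma>)) k \<union> {\<gamma>\<in>Dset t \<sigma>. weight \<gamma> = k \<and> True}"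
        using N0(1)[OF sp] by (auto simp: Aset_def Dset_def)
      moreover have "Aset (AvSet (t#\<sigma>)) k \<inter> {\<gamma>\<in>Dset t \<sigma>. weight \<gamma> = k \<and> True} = {}"
        using N0(2)[OF sp] by (auto simp: Aset_def)
      moreover have "finite {\<gamma>\<in>Dset t \<sigma>. weight \<gamma> = k \<and> True}"
        by (rule finite_subset[OF _ finite_parts[of k]]) (auto simp: Dset_def)
      ultimately show ?thesis by (simp add: card_Un_disjoint finite_Aset)
    qed
    have nd: "card {\<gamma>\<in>Dset t \<sigma>. weight \<gamma> = k \<and> True} = card {\<alpha>\<in>?Q. weight \<alpha> \<le> k \<and> mlarge \<alpha> dvd (k - weight \<alpha>) \<and> True}"
      by (rule ND[OF sp])
    have "{\<alpha>\<in>?Q. weight \<alpha> \<le> k \<and> mlarge \<alpha> dvd (k - weight \<alpha>) \<and> True}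
        = {\<alpha>\<in>?Q. weight \<alpha> \<le> k \<and> (j < mlarge \<alpha> \<and> j + weight \<alpha> \<le> k \<and> mlarge \<alpha> dvd (k - weight \<alpha> - j))}"
      using True ml_pos_Q by auto
    thus ?thesis using c True av nd by (simp add: Gs_coeff Q_ml0)
  next
    case False
    have n1: "card {\<gamma>\<in>QSet (Suc t#t#\<sigma>) (Suc (Suc t)#t#\<sigma>). weight \<gamma> = k \<and> mlarge \<gamma> = j}
       = card {\<delta>\<in>Dset t \<sigma>. weight \<delta> + j = k \<and> j < mlarge \<delta>}"
      using N1[OF sp] False by simp
    have e1: "{\<gamma>\<in>QSet (Suc t#t#\<sigma>) (Suc (Suc t)#t#\<sigma>). weight \<gamma> = k \<and> mlarge \<gamma> = j}
        = {\<alpha>\<in>Aset (QSet (Suc t#t#\<sigma>) (Suc (Suc t)#t#\<sigma>)) k. mlarge \<alpha> = j}"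
      by (auto simp: Aset_def QSet_def)
    have rhs: "card {\<delta>\<in>Dset t \<sigma>. weight \<delta> + j = k \<and> j < mlarge \<delta>}
       = card {\<alpha>\<in>?Q. weight \<alpha> \<le> k \<and> (j < mlarge \<alpha> \<and> j + weight \<alpha> \<le> k \<and> mlarge \<alpha> dvd (k - weight \<alpha> - j))}"
    proof (cases "j \<le> k")
      case True
      have "{\<delta>\<in>Dset t \<sigma>. weight \<delta> + j = k \<and> j < mlarge \<delta>} = {\<delta>\<in>Dset t \<sigma>. weight \<delta> = k - j \<and> j < mlarge \<delta>}"
        using True by auto
      also have "card \<dots> = card {\<alpha>\<in>?Q. weight \<alpha> \<le> k - j \<and> mlarge \<alpha> dvd (k - j - weight \<alpha>) \<and> j < mlarge \<alpha>}"
        by (rule ND[OF sp])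
      also have "{\<alpha>\<in>?Q. weight \<alpha> \<le> k - j \<and> mlarge \<alpha> dvd (k - j - weight \<alpha>) \<and> j < mlarge \<alpha>}
          = {\<alpha>\<in>?Q. weight \<alpha> \<le> k \<and> (j < mlarge \<alpha> \<and> j + weight \<alpha> \<le> k \<and> mlarge \<alpha> dvd (k - weight \<alpha> - j))}"
        using True by (auto simp: diff_commute add.commute)
      finally show ?thesis .
    next
      case f: False
      have E1: "{\<delta>\<in>Dset t \<sigma>. weight \<delta> + j = k \<and> j < mlarge \<delta>} = {}" using f by auto
      have E2: "{\<alpha>\<in>?Q. weight \<alpha> \<le> k \<and> (j < mlarge \<alpha> \<and> j + weight \<alpha> \<le> k \<and> mlarge \<alpha> dvd (k - weight \<alpha> - j))} = {}"
        using f by auto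
      show ?thesis unfolding E1 E2 by simp
    qed
    show ?thesis using c False n1 e1 rhs by (simp add: Gs_coeff)
  qed
qed



lemma ss_cons:
  assumes "is_partition (a#\<rho>)" "super_strict (a#\<rho>)"
  shows "is_partition \<rho>" "super_strict \<rho>" "0 < a" "\<rho> \<noteq> [] \<Longrightarrow> hd \<rho> + 2 \<le> a"
proof -
  show "is_partition \<rho>" using assms(1) by (auto simp: is_partition_def sorted_append)
  show "0 < a" using assms(1) by (auto simp: is_partition_def intro: gr0I)
  show "super_strict \<rho>" unfolding super_strict_def
  proof (intro allI impI)
    fix i assume "i + 1 < length \<rho>"
    hence "Suc i + 1 < length (a#\<rho>)" by simp
    hence "(a#\<rho>) ! (Suc i + 1) + 2 \<le> (a#\<rho>) ! Suc i" using assms(2) unfolding super_strict_def by blast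
    thus "\<rho> ! (i + 1) + 2 \<le> \<rho> ! i" by simp
  qed
  assume "\<rho> \<noteq> []"
  hence "0 + 1 < length (a#\<rho>)" by simp
  hence "(a#\<rho>) ! (0 + 1) + 2 \<le> (a#\<rho>) ! 0" using assms(2) unfolding super_strict_def by blast
  thus "hd \<rho> + 2 \<le> a" using \<open>\<rho> \<noteq> []\<close> by (cases \<rho>) auto
qed

lemma ss_build:
  assumes "is_partition \<rho>" "super_strict \<rho>" "0 < a" "\<rho> \<noteq> [] \<Longrightarrow> hd \<rho> + 2 \<le> a"
  shows "is_partition (a#\<rho>)" "super_strict (a#\<rho>)"
proof -
  have le: "\<forall>x\<in>set \<rho>. x \<le> a"
  proof
    fix x assume x: "x \<in> set \<rho>"
    hence "\<rho> \<noteq> []" by auto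
    thus "x \<le> a" using part_le_hd[OF assms(1) x] assms(4) by linarith
  qed
  show "is_partition (a#\<rho>)" using assms(1,3) le by (auto simp: is_partition_def sorted_append)
  show "super_strict (a#\<rho>)" unfolding super_strict_def
  proof (intro allI impI)
    fix i assume i: "i + 1 < length (a#\<rho>)"
    show "(a#\<rho>) ! (i + 1) + 2 \<le> (a#\<rho>) ! i"
    proof (cases i)
      case 0
      hence "\<rho> \<noteq> []" using i by auto
      thus ?thesis using assms(4) 0 by (cases \<rho>) auto
    next
      case (Suc j)
      hence "j + 1 < length \<rho>" using i by simp
      thus ?thesis using assms(2) Suc unfolding super_strict_def by simp
    qed
  qed
qed

lemma ss_sorted: "is_partition \<rho> \<Longrightarrow> super_strict \<rho> \<Longrightarrow> sorted_wrt (>) \<rho>"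
proof (induction \<rho>)
  case Nil then show ?case by simp
next
  case (Cons a \<rho>)
  note c = ss_cons[OF Cons.prems]
  have "\<forall>x\<in>set \<rho>. x < a"
  proof
    fix x assume x: "x \<in> set \<rho>"
    hence "\<rho> \<noteq> []" by auto
    thus "x < a" using part_le_hd[OF c(1) x] c(4) by linarith
  qed
  thus ?case using Cons.IH[OF c(1,2)] by simp
qed

lemma sp_of:
  assumes "is_partition \<rho>" "super_strict \<rho>" "0 < t" "\<rho> \<noteq> [] \<Longrightarrow> hd \<rho> < t"
  shows "sp (t#\<rho>)"
proof -
  have "\<forall>x\<in>set \<rho>. x < t"
  proof
    fix x assume x: "x \<in> set \<rho>"
    hence "\<rho> \<noteq> []" by auto
    thus "x < t" using part_le_hd[OF assms(1) x] assms(4) by linarith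
  qed
  thus ?thesis using ss_sorted[OF assms(1,2)] assms(1,3) by (auto simp: sp_def is_partition_def)
qed

lemma border_Nil: "border [] = []" by (simp add: border_def)

lemma border_Cons: "border (a#\<rho>) = border \<rho> @ replicate (a - topv \<rho>) East @ [North]"
proof -
  define f where "f = (\<lambda>(\<mu>::nat list) i. replicate (\<mu> ! i - (if i + 1 < length \<mu> then \<mu> ! (i+1) else 0)) East @ [North])"
  have b: "border \<mu> = concat (map (f \<mu>) (rev [0..<length \<mu>]))" for \<mu> by (simp add: border_def f_def)
  have r: "rev [0..<length (a#\<rho>)] = map Suc (rev [0..<length \<rho>]) @ [0]"
    by (simp add: upt_conv_Cons map_Suc_upt[symmetric] rev_map del: upt_Suc)
  have m: "map (f (a#\<rho>)) (map Suc (rev [0..<length \<rho>])) = map (f \<rho>) (rev [0..<length \<rho>])"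
    by (simp add: f_def)
  have f0: "f (a#\<rho>) 0 = replicate (a - topv \<rho>) East @ [North]"
    by (cases \<rho>) (simp_all add: f_def topv_def)
  have "border (a#\<rho>) = concat (map (f (a#\<rho>)) (map Suc (rev [0..<length \<rho>]) @ [0]))" unfolding b r ..
  also have "\<dots> = concat (map (f (a#\<rho>)) (map Suc (rev [0..<length \<rho>]))) @ f (a#\<rho>) 0" by simp
  also have "\<dots> = border \<rho> @ replicate (a - topv \<rho>) East @ [North]" unfolding m f0 b[of \<rho>] ..
  finally show ?thesis .
qed

fun wfs :: "step list \<Rightarrow> bool" where
  "wfs [] = True"
| "wfs (East # xs) = wfs xs"
| "wfs (North # East # xs) = wfs xs"
| "wfs (North # xs) = False"

lemma tokens_app: "wfs xs \<Longrightarrow> tokens (xs @ ys) = tokens xs @ tokens ys"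
  by (induction xs rule: wfs.induct) auto

lemma wf_app: "wfs xs \<Longrightarrow> wfs ys \<Longrightarrow> wfs (xs @ ys)"
  by (induction xs rule: wfs.induct) auto

lemma wf_rep: "wfs (replicate n East)"
  by (induction n) auto

lemma wf_rep_NE: "wfs (replicate n East @ [North, East])"
  by (induction n) auto

lemma tokens_rep: "tokens (replicate n East) = replicate n OpE"
  by (induction n) auto

lemma border_ne: "\<rho> \<noteq> [] \<Longrightarrow> border \<rho> \<noteq> []"
  by (cases \<rho>) (auto simp: border_Cons)

lemma tl_border: "\<rho> \<noteq> [] \<Longrightarrow> tl (border (c#\<rho>)) = tl (border \<rho>) @ replicate (c - topv \<rho>) East @ [North]"
  using border_ne[of \<rho>] by (simp add: border_Cons)

lemma bb: "butlast (butlast (xs @ replicate (Suc n) East @ [North])) = xs @ replicate n East"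
proof -
  have "xs @ replicate (Suc n) East @ [North] = ((xs @ replicate n East) @ [East]) @ [North]"
    by (simp add: replicate_append_same)
  thus ?thesis by (simp only: butlast_snoc)
qed

lemma wf_border:
  "is_partition \<rho> \<Longrightarrow> super_strict \<rho> \<Longrightarrow> \<rho> \<noteq> [] \<Longrightarrow> wfs (tl (border \<rho>) @ [East])"
proof (induction \<rho>)
  case Nil then show ?case by simp
next
  case (Cons a \<rho>)
  note c = ss_cons[OF Cons.prems(1,2)]
  show ?case
  proof (cases "\<rho> = []")
    case True
    then obtain a' where a': "a = Suc a'" using c(3) by (cases a) auto
    have "tl (border (a#\<rho>)) @ [East] = replicate a' East @ [North, East]"
      using True a' by (simp add: border_Cons border_Nil topv_def)
    thus ?thesis by (simp only: wf_rep_NE)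
  next
    case False
    have d: "2 \<le> a - topv \<rho>" using c(4)[OF False] False by (cases \<rho>) (auto simp: topv_def)
    then obtain d' where d': "a - topv \<rho> = Suc d'" by (cases "a - topv \<rho>") auto
    have E: "tl (border (a#\<rho>)) @ [East] = (tl (border \<rho>) @ [East]) @ (replicate d' East @ [North, East])"
      using tl_border[OF False, of a] d' by (simp add: replicate_append_same)
    show ?thesis unfolding E by (rule wf_app[OF Cons.IH[OF c(1,2) False] wf_rep_NE])
  qed
qed

lemma Theta_single: "2 \<le> a \<Longrightarrow> Theta [a] = replicate (a - 2) OpE"
proof -
  assume a: "2 \<le> a"
  then obtain b where b: "a = Suc (Suc b)" by (metis add_2_eq_Suc le_Suc_ex)
  have "tl (border [a]) = [] @ replicate (Suc b) East @ [North]" using b by (simp add: border_Cons border_Nil topv_def)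
  hence "butlast (butlast (tl (border [a]))) = replicate b East" using bb[of "[]" b] by simp
  thus ?thesis unfolding Theta_def using b by (simp add: tokens_rep)
qed

lemma Theta_cons: "\<rho> \<noteq> [] \<Longrightarrow> c - topv \<rho> = Suc n \<Longrightarrow> Theta (c#\<rho>) = tokens (tl (border \<rho>) @ replicate n East)"
  unfolding Theta_def using tl_border[of \<rho> c] bb by simp

lemma Theta_E:
  assumes "is_partition \<rho>" "super_strict \<rho>" "\<rho> \<noteq> []" "hd \<rho> + 3 \<le> a"
  shows "Theta (a#\<rho>) = Theta ((a - 1)#\<rho>) @ [OpE]"
proof -
  define d where "d = a - hd \<rho> - 3"
  have topv: "topv \<rho> = hd \<rho>" using assms(3) by (cases \<rho>) (auto simp: topv_def)
  have d1: "a - topv \<rho> = Suc (Suc (Suc d))" using assms(4) topv by (simp add: d_def)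
  have d2: "a - 1 - topv \<rho> = Suc (Suc d)" using assms(4) topv by (simp add: d_def)
  have w: "wfs (tl (border \<rho>) @ [East])" by (rule wf_border[OF assms(1-3)])
  have T: "tokens (tl (border \<rho>) @ replicate (Suc m) East) = tokens (tl (border \<rho>) @ [East]) @ replicate m OpE" for m
  proof -
    have eq: "tl (border \<rho>) @ replicate (Suc m) East = (tl (border \<rho>) @ [East]) @ replicate m East" by simp
    show ?thesis by (simp only: eq tokens_app[OF w] tokens_rep)
  qed
  have "Theta (a#\<rho>) = tokens (tl (border \<rho>) @ replicate (Suc (Suc d)) East)" by (rule Theta_cons[OF assms(3) d1])
  also have "\<dots> = tokens (tl (border \<rho>) @ [East]) @ replicate (Suc d) OpE" by (rule T)
  finally have 1: "Theta (a#\<rho>) = tokens (tl (border \<rho>) @ [East]) @ replicate (Suc d) OpE" .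
  have "Theta ((a-1)#\<rho>) = tokens (tl (border \<rho>) @ replicate (Suc d) East)" by (rule Theta_cons[OF assms(3) d2])
  also have "\<dots> = tokens (tl (border \<rho>) @ [East]) @ replicate d OpE" by (rule T)
  finally have 2: "Theta ((a-1)#\<rho>) = tokens (tl (border \<rho>) @ [East]) @ replicate d OpE" .
  have "replicate (Suc d) OpE = replicate d OpE @ [OpE]" by (simp add: replicate_append_same)
  moreover note 1 2
  ultimately show ?thesis by (simp add: replicate_append_same)
qed

lemma Theta_N:
  assumes "is_partition (b#\<rho>)" "super_strict (b#\<rho>)"
  shows "Theta (Suc (Suc b)#b#\<rho>) = Theta (Suc b#\<rho>) @ [OpN]"
proof -
  note c = ss_cons[OF assms]
  define X where "X = border \<rho> @ replicate (b - topv \<rho>) East"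
  have c0: "1 \<le> b - topv \<rho>"
  proof (cases "\<rho> = []")
    case True thus ?thesis using c(3) by (simp add: topv_def)
  next
    case False thus ?thesis using c(4)[OF False] by (cases \<rho>) (auto simp: topv_def)
  qed
  then obtain e where e: "b - topv \<rho> = Suc e" by (cases "b - topv \<rho>") auto
  have ne: "X \<noteq> []" using e by (simp add: X_def)
  have "Theta (Suc (Suc b)#b#\<rho>) = tokens (tl (border (b#\<rho>)) @ replicate 1 East)"
    by (rule Theta_cons) (simp_all add: topv_def)
  also have "tl (border (b#\<rho>)) @ replicate 1 East = tl X @ [North, East]"
  proof -
    have bX: "border (b#\<rho>) = X @ [North]" by (simp add: border_Cons X_def)
    show ?thesis unfolding bX using tl_append2[OF ne, of "[North]"] by simp
  qed
  finally have t1: "Theta (Suc (Suc b)#b#\<rho>) = tokens (tl X @ [North, East])" .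
  have t2: "Theta (Suc b#\<rho>) = tokens (tl X)"
  proof (cases "\<rho> = []")
    case True
    hence "Theta (Suc b#\<rho>) = replicate (b - 1) OpE" using Theta_single[of "Suc b"] c(3) by simp
    moreover have "tl X = replicate (b - 1) East" using True by (simp add: X_def border_Nil topv_def)
    ultimately show ?thesis by (simp add: tokens_rep)
  next
    case False
    have "Suc b - topv \<rho> = Suc (b - topv \<rho>)" using e by simp
    hence "Theta (Suc b#\<rho>) = tokens (tl (border \<rho>) @ replicate (b - topv \<rho>) East)" by (rule Theta_cons[OF False])
    thus ?thesis using border_ne[OF False] by (simp add: X_def)
  qed
  have wZ: "wfs (tl X)"
  proof (cases "\<rho> = []")
    case True thus ?thesis by (simp add: X_def border_Nil wf_rep)
  next
    case False
    have bn: "border \<rho> \<noteq> []" by (rule border_ne[OF False])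
    have E: "tl X = (tl (border \<rho>) @ [East]) @ replicate e East" using bn e by (simp add: X_def replicate_append_same)
    show ?thesis unfolding E by (rule wf_app[OF wf_border[OF c(1,2) False] wf_rep])
  qed
  show ?thesis unfolding t1 t2 using tokens_app[OF wZ, of "[North, East]"] by simp
qed



abbreviation G0 :: bser where "G0 \<equiv> Tvar * fps_X * inv1 (1 - Tvar * fps_X)"

definition Zs :: bser where "Zs = Abs_fps (\<lambda>k. if k = 0 then 0 else monom 1 k)"

lemma G0_eq: "G0 = Zs"
proof -
  have key: "Zs * (1 - Tvar * fps_X) = Tvar * fps_X"
  proof (rule fps_ext)
    fix k
    have l: "(Zs * (1 - Tvar * fps_X)) $ k = Zs $ k - (Zs * (Tvar * fps_X)) $ k"
      by (simp add: right_diff_distrib)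
    have r: "(Tvar * fps_X) $ k = (1 * (Tvar * fps_X)) $ k" by simp
    show "(Zs * (1 - Tvar * fps_X)) $ k = (Tvar * fps_X) $ k"
      unfolding l r TX_nth
    proof (cases k)
      case 0 thus "Zs $ k - (if k = 0 then 0 else pCons 0 (Zs $ (k - 1))) = (if k = 0 then 0 else pCons 0 ((1::bser) $ (k - 1)))"
        by (simp add: Zs_def)
    next
      case (Suc n)
      thus "Zs $ k - (if k = 0 then 0 else pCons 0 (Zs $ (k - 1))) = (if k = 0 then 0 else pCons 0 ((1::bser) $ (k - 1)))"
        by (cases n) (simp_all add: Zs_def monom_Suc monom_0 one_pCons)
    qed
  qed
  have one: "(1 - Tvar * fps_X) * inv1 (1 - Tvar * fps_X) = 1" by (rule inv1_right) simp
  have "G0 = Zs * (1 - Tvar * fps_X) * inv1 (1 - Tvar * fps_X)" unfolding key ..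
  also have "\<dots> = Zs" by (simp add: mult.assoc one)
  finally show ?thesis .
qed

lemma sp1: "sp [1]" by (simp add: sp_def)
lemma sp2: "sp [2]" by (simp add: sp_def)

lemma contains_single:
  assumes "is_partition \<alpha>" "\<alpha> \<noteq> []" "0 < s"
  shows "contains \<alpha> [s] \<longleftrightarrow> s \<le> hd \<alpha>"
  using contains_cons[OF assms(1,2), of s "[]"] assms(3) by (simp add: sp_def ok_def)

lemma base_Av: "Aset (AvSet [1]) k = {}"
proof -
  have "\<not> (\<alpha> \<in> AvSet [1])" for \<alpha>
  proof
    assume a: "\<alpha> \<in> AvSet [1]"
    hence p: "is_partition \<alpha>" "\<alpha> \<noteq> []" using part_pos by (auto simp: AvSet_def)
    have "contains \<alpha> [1]" using contains_single[OF p, of 1] hd_pos[OF p] by simp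
    thus False using a by (simp add: AvSet_def avoids_def)
  qed
  thus ?thesis by (auto simp: Aset_def)
qed

lemma rep1_part: "is_partition (replicate k (1::nat))"
  by (simp add: is_partition_def)

lemma base_Q: "Aset (QSet [1] [2]) k = (if k = 0 then {} else {replicate k 1})"
proof -
  have "\<alpha> \<in> Aset (QSet [1] [2]) k \<longleftrightarrow> 0 < k \<and> \<alpha> = replicate k 1" for \<alpha>
  proof
    assume a: "\<alpha> \<in> Aset (QSet [1] [2]) k"
    hence p: "is_partition \<alpha>" "\<alpha> \<noteq> []" "weight \<alpha> = k" "0 < weight \<alpha>" "avoids \<alpha> [2]"
      using part_pos by (auto simp: Aset_def QSet_def)
    have h: "hd \<alpha> < 2" using p(5) contains_single[OF p(1,2), of 2] by (simp add: avoids_def)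
    have all1: "\<forall>x\<in>set \<alpha>. x = 1"
    proof
      fix x assume x: "x \<in> set \<alpha>"
      have "x \<le> hd \<alpha>" by (rule part_le_hd[OF p(1) x])
      moreover have "0 < x" using p(1) x by (auto simp: is_partition_def intro: gr0I)
      ultimately show "x = 1" using h by linarith
    qed
    hence e: "\<alpha> = replicate (length \<alpha>) 1" by (simp add: replicate_length_same)
    have "weight \<alpha> = length \<alpha>" by (subst e) (simp add: weight_def sum_list_replicate)
    thus "0 < k \<and> \<alpha> = replicate k 1" using e p(3,4) by simp
  next
    assume a: "0 < k \<and> \<alpha> = replicate k 1"
    hence ne: "\<alpha> \<noteq> []" and p: "is_partition \<alpha>" using rep1_part by auto
    have w: "weight \<alpha> = k" using a by (simp add: weight_def sum_list_replicate)
    have hd1: "hd \<alpha> = 1" using a by (cases k) auto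
    show "\<alpha> \<in> Aset (QSet [1] [2]) k"
      using contains_single[OF p ne, of 1] contains_single[OF p ne, of 2] hd1 w a p
      by (simp add: Aset_def QSet_def avoids_def)
  qed
  thus ?thesis by auto
qed

lemma base: "G0 = Gs [1] [2]"
proof -
  have "Gs [1] [2] = Zs"
  proof (rule fps_ext)
    fix k
    show "Gs [1] [2] $ k = Zs $ k"
    proof (cases "k = 0")
      case True thus ?thesis unfolding Gs_def fps_add_nth at_t1_Fser Fser_nth base_Av base_Q by (simp add: Zs_def)
    next
      case False
      have "mlarge (replicate k (1::nat) @ []) = k" by (rule mlarge_rep) (use False in auto)
      thus ?thesis using False unfolding Gs_def fps_add_nth at_t1_Fser Fser_nth base_Av base_Q by (simp add: Zs_def)
    qed
  qed
  thus ?thesis using G0_eq by simp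
qed

lemma apply_Theta_snoc: "apply_Theta (xs @ [p]) G = apply_op p (apply_Theta xs G)"
  by (simp add: apply_Theta_def)

lemma weight_Cons: "weight (a#\<rho>) = a + weight \<rho>"
  by (simp add: weight_def)

lemma main_ind:
  "is_partition \<mu> \<Longrightarrow> super_strict \<mu> \<Longrightarrow> 2 \<le> weight \<mu> \<Longrightarrow>
   apply_Theta (Theta \<mu>) G0 = Gs ((hd \<mu> - 1) # tl \<mu>) \<mu>"
proof (induction "weight \<mu>" arbitrary: \<mu> rule: less_induct)
  case less
  have "\<mu> \<noteq> []" using less.prems(3) by (auto simp: weight_def)
  then obtain a \<rho> where mu: "\<mu> = a # \<rho>" by (cases \<mu>) auto
  note c = ss_cons[OF less.prems(1,2)[unfolded mu]]
  show ?case
  proof (cases \<rho>)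
    case Nil
    have a2: "2 \<le> a" using less.prems(3) mu Nil by (simp add: weight_def)
    show ?thesis
    proof (cases "a = 2")
      case True
      have "Theta [2] = []" using Theta_single[of 2] by simp
      thus ?thesis using mu Nil True base by (simp add: apply_Theta_def)
    next
      case False
      define t where "t = a - 2"
      have t: "a = Suc (Suc t)" "0 < t" using a2 False by (simp_all add: t_def)
      have th: "Theta [a] = Theta [Suc t] @ [OpE]"
        using Theta_single[of a] Theta_single[of "Suc t"] t by (cases t) (simp_all add: replicate_append_same)
      have IH: "apply_Theta (Theta [Suc t]) G0 = Gs [t] [Suc t]"
      proof -
        have "apply_Theta (Theta [Suc t]) G0 = Gs ((hd [Suc t] - 1) # tl [Suc t]) [Suc t]"
          by (rule less.hyps) (use mu Nil t in \<open>simp_all add: weight_def is_partition_def super_strict_def\<close>)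
        thus ?thesis by simp
      qed
      have spt: "sp [t]" using t by (simp add: sp_def)
      show ?thesis unfolding mu Nil th apply_Theta_snoc IH
        using E_step[OF spt] t(1) by (simp add: apply_op_def)
    qed
  next
    case (Cons b \<rho>')
    have hb: "hd \<rho> = b" using Cons by simp
    have ba: "b + 2 \<le> a" using c(4) Cons by simp
    have b0: "0 < b" using c(1) Cons hd_pos by fastforce
    show ?thesis
    proof (cases "a = b + 2")
      case True
      note c2 = ss_cons[OF c(1,2)[unfolded Cons]]
      have h: "hd \<rho>' + 2 \<le> Suc b" if "\<rho>' \<noteq> []"
      proof -
        have "hd \<rho>' + 2 \<le> b" by (rule c2(4)[OF that])
        thus ?thesis by simp
      qed
      note ssn = ss_build[OF c2(1,2) zero_less_Suc h]
      have th: "Theta \<mu> = Theta (Suc b # \<rho>') @ [OpN]"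
        unfolding mu Cons True using Theta_N[OF c(1,2)[unfolded Cons]] by simp
      have IH: "apply_Theta (Theta (Suc b # \<rho>')) G0 = Gs (b # \<rho>') (Suc b # \<rho>')"
      proof -
        have "apply_Theta (Theta (Suc b # \<rho>')) G0 = Gs ((hd (Suc b # \<rho>') - 1) # tl (Suc b # \<rho>')) (Suc b # \<rho>')"
          by (rule less.hyps) (use ssn mu Cons True b0 in \<open>simp_all add: weight_Cons\<close>)
        thus ?thesis by simp
      qed
      have spt: "sp (b # \<rho>')"
        by (rule sp_of[OF c2(1,2) b0]) (use c2(4) in linarith)
      show ?thesis unfolding th apply_Theta_snoc IH
        using N_step[OF spt] mu Cons True by (simp add: apply_op_def)
    next
      case False
      hence ba3: "hd \<rho> + 3 \<le> a" using ba hb by linarith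
      define t where "t = a - 2"
      have t: "a = Suc (Suc t)" using ba3 by (simp add: t_def)
      have ne: "\<rho> \<noteq> []" using Cons by simp
      have h: "hd \<rho> + 2 \<le> Suc t" if "\<rho> \<noteq> []" using ba3 t by simp
      note ssn = ss_build[OF c(1,2) zero_less_Suc h]
      have th: "Theta \<mu> = Theta (Suc t # \<rho>) @ [OpE]"
        unfolding mu using Theta_E[OF c(1,2) ne ba3] t by simp
      have IH: "apply_Theta (Theta (Suc t # \<rho>)) G0 = Gs (t # \<rho>) (Suc t # \<rho>)"
      proof -
        have "apply_Theta (Theta (Suc t # \<rho>)) G0 = Gs ((hd (Suc t # \<rho>) - 1) # tl (Suc t # \<rho>)) (Suc t # \<rho>)"
          by (rule less.hyps) (use ssn mu Cons t ba3 b0 in \<open>simp_all add: weight_Cons\<close>)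
        thus ?thesis by simp
      qed
      have spt: "sp (t # \<rho>)"
        by (rule sp_of[OF c(1,2)]) (use ba3 t in linarith)+
      show ?thesis unfolding th apply_Theta_snoc IH
        using E_step[OF spt] mu t by (simp add: apply_op_def)
    qed
  qed
qed



lemma poly_Gs: "poly (Gs \<tau> \<mu> $ k) 1 = int (card (Aset (AvSet \<tau>) k)) + int (card (Aset (QSet \<tau> \<mu>) k))"
  by (simp add: Gs_def at_t1_Fser Fser_nth poly_sum poly_monom)

theorem mainTheorem1:
  fixes \<mu> :: "nat list"
  assumes "is_partition \<mu>" and "super_strict \<mu>" and "weight \<mu> \<ge> 2"
  defines "\<tau> \<equiv> (hd \<mu> - 1) # tl \<mu>"
  shows "apply_Theta (Theta \<mu>) (Tvar * fps_X * inv1 (1 - Tvar * fps_X))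
           = at_t1 (Fser (AvSet \<tau>)) + Fser (QSet \<tau> \<mu>)
      \<and> at_t1 (Fser (AvSet \<mu>)) = at_t1 (apply_Theta (Theta \<mu>) (Tvar * fps_X * inv1 (1 - Tvar * fps_X)))
      \<and> at_t1 (apply_Theta (Theta \<mu>) (Tvar * fps_X * inv1 (1 - Tvar * fps_X)))
           = Abs_fps (\<lambda>n. if n = 0 then 0 else [:int (card (Av n \<mu>)) :])"
proof -
  have M: "apply_Theta (Theta \<mu>) G0 = Gs \<tau> \<mu>"
    unfolding \<tau>_def by (rule main_ind[OF assms(1,2,3)])
  have "\<mu> \<noteq> []" using assms(3) by (auto simp: weight_def)
  then obtain a \<rho> where mu: "\<mu> = a # \<rho>" by (cases \<mu>) auto
  note c = ss_cons[OF assms(1,2)[unfolded mu]]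
  have a2: "2 \<le> a"
  proof (cases "\<rho> = []")
    case True thus ?thesis using assms(3) mu by (simp add: weight_def)
  next
    case False thus ?thesis using c(4)[OF False] by simp
  qed
  define t where "t = a - 1"
  have at: "a = Suc t" "0 < t" using a2 by (simp_all add: t_def)
  have tau: "\<tau> = t # \<rho>" by (simp add: \<tau>_def mu t_def)
  have mu': "\<mu> = Suc t # \<rho>" using mu at by simp
  have spt: "sp (t # \<rho>)"
    by (rule sp_of[OF c(1,2) at(2)]) (use c(4) at in fastforce)
  have C2: "at_t1 (Fser (AvSet \<mu>)) = at_t1 (Gs \<tau> \<mu>)"
  proof (rule fps_ext)
    fix k
    have "card (Aset (AvSet \<mu>) k) = card (Aset (AvSet \<tau>) k) + card (Aset (QSet \<tau> \<mu>) k)"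
    proof -
      have "Aset (AvSet \<mu>) k = Aset (AvSet \<tau>) k \<union> Aset (QSet \<tau> \<mu>) k"
        using E0(1)[OF spt] unfolding tau mu' by (auto simp: Aset_def)
      moreover have "Aset (AvSet \<tau>) k \<inter> Aset (QSet \<tau> \<mu>) k = {}"
        using E0(2)[OF spt] unfolding tau mu' by (auto simp: Aset_def)
      ultimately show ?thesis by (simp add: card_Un_disjoint finite_Aset)
    qed
    thus "at_t1 (Fser (AvSet \<mu>)) $ k = at_t1 (Gs \<tau> \<mu>) $ k"
      by (simp only: at_t1_Fser) (simp add: at_t1_def poly_Gs)
  qed
  have C3: "at_t1 (Fser (AvSet \<mu>)) = Abs_fps (\<lambda>n. if n = 0 then 0 else [:int (card (Av n \<mu>)) :])"
  proof (rule fps_ext)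
    fix n
    show "at_t1 (Fser (AvSet \<mu>)) $ n = Abs_fps (\<lambda>n. if n = 0 then 0 else [:int (card (Av n \<mu>)) :]) $ n"
    proof (cases "n = 0")
      case True
      have "Aset (AvSet \<mu>) 0 = {}" by (auto simp: Aset_def AvSet_def)
      thus ?thesis using True by (simp add: at_t1_Fser)
    next
      case False
      have "Aset (AvSet \<mu>) n = Av n \<mu>" using False by (auto simp: Aset_def AvSet_def Av_def)
      thus ?thesis using False by (simp add: at_t1_Fser)
    qed
  qed
  show ?thesis using M C2 C3 by (simp add: Gs_def)
qed


end
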